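(* Let $p=1/2$. There exist sets $\mathcal{X}_t\subset\mathcal{U}_0$, $t>0$, such that (i) $\mathbb{P}(X_t\in\mathcal{X}_t)\to1$ as $t\to\infty$, and (ii) $\lim_{t\to\infty}\frac{\log|\mathcal{X}_t|}{\sqrt t}=\frac{\pi}{\sqrt3}$.
   Context: The simple exclusion process on $\mathbb{Z}$ with parameter $p\in(0,1)$: each site is occupied by at most one particle; each particle attempts to jump one site to the right at rate $p$ and one site to the left at rate $1-p$, an attempt succeeding iff the target site is empty. $O$ is the configuration with every negative site occupied and every non-negative site empty; $\mathcal{U}_0$ is the set of configurations in which the number of particles in $[0,\infty)$ is finite and equal to the number of holes in $(-\infty,0)$. $\mathbb{P}$ is the law of the process started from $O$, $X_t$ the state at time $t$. *)

theory Defs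
  imports "HOL-Analysis.Analysis"
begin

(* A configuration: eta x = True iff site x is occupied. *)
type_synonym config = "int \<Rightarrow> bool"

definition Ostep :: config where
  "Ostep = (\<lambda>x. x < 0)"

definition U0 :: "config set" where
  "U0 = {\<eta>. finite {x. 0 \<le> x \<and> \<eta> x} \<and> finite {x. x < 0 \<and> \<not> \<eta> x} \<and>
             card {x. 0 \<le> x \<and> \<eta> x} = card {x. x < 0 \<and> \<not> \<eta> x}}"

definition swp :: "config \<Rightarrow> int \<Rightarrow> config" where
  "swp \<eta> x = \<eta>(x := \<eta> (x+1), x+1 := \<eta> x)"

definition rate :: "real \<Rightarrow> config \<Rightarrow> config \<Rightarrow> real" where
  "rate p \<eta> \<zeta> =
     (if \<exists>x. \<eta> x \<and> \<not> \<eta> (x+1) \<and> \<zeta> = swp \<eta> x then p else 0) +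
     (if \<exists>x. \<not> \<eta> x \<and> \<eta> (x+1) \<and> \<zeta> = swp \<eta> x then 1 - p else 0)"

definition qtot :: "real \<Rightarrow> config \<Rightarrow> real" where
  "qtot p \<eta> = p * real (card {x. \<eta> x \<and> \<not> \<eta> (x+1)})
             + (1 - p) * real (card {x. \<not> \<eta> x \<and> \<eta> (x+1)})"

definition preds :: "config \<Rightarrow> config set" where
  "preds \<eta> = (\<lambda>x. swp \<eta> x) ` {x. \<eta> x \<noteq> \<eta> (x+1)}"

(* pn p n eta t = probability that, started from O, the process has made exactly
   n jumps by time t and is at eta (last-jump decomposition of the jump chain
   with exponential holding times). *)
fun pn :: "real \<Rightarrow> nat \<Rightarrow> config \<Rightarrow> real \<Rightarrow> real" where
  "pn p 0 \<eta> t = (if \<eta> = Ostep then exp (- qtot p Ostep * t) else 0)"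
| "pn p (Suc n) \<eta> t =
     integral {0..t} (\<lambda>s. (\<Sum>\<zeta>\<in>preds \<eta>. pn p n \<zeta> s * rate p \<zeta> \<eta>) * exp (- qtot p \<eta> * (t - s)))"

definition trans_prob :: "real \<Rightarrow> real \<Rightarrow> config \<Rightarrow> real" where
  "trans_prob p t \<eta> = (\<Sum>n. pn p n \<eta> t)"

definition prob_in :: "real \<Rightarrow> real \<Rightarrow> config set \<Rightarrow> real" where
  "prob_in p t A = (\<Sum>\<^sub>\<infinity>\<eta>\<in>A. trans_prob p t \<eta>)"

end

theory Submission
  imports Defs "HOL-Real_Asymp.Real_Asymp"
begin

definition Pp :: "config \<Rightarrow> int set" where "Pp \<eta> = {x. 0 \<le> x \<and> \<eta> x}"
definition Hm :: "config \<Rightarrow> int set" where "Hm \<eta> = {x. x < 0 \<and> \<not> \<eta> x}"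
definition mv :: "config \<Rightarrow> int set" where "mv \<eta> = {x. \<eta> x \<noteq> \<eta> (x+1)}"
definition Aa :: "config \<Rightarrow> int" where "Aa \<eta> = (\<Sum>y\<in>Pp \<eta>. y) + (\<Sum>z\<in>Hm \<eta>. - z)"

lemma U0_iff: "\<eta> \<in> U0 \<longleftrightarrow> finite (Pp \<eta>) \<and> finite (Hm \<eta>) \<and> card (Pp \<eta>) = card (Hm \<eta>)"
  by (simp add: U0_def Pp_def Hm_def)

lemma swp_apply: "swp \<eta> x y = (if y = x then \<eta> (x+1) else if y = x+1 then \<eta> x else \<eta> y)"
  by (simp add: swp_def)

lemma swp_swp: "swp (swp \<eta> x) x = \<eta>"
  by (rule ext) (simp add: swp_apply)

lemma mv_swp: "x \<in> mv \<eta> \<Longrightarrow> x \<in> mv (swp \<eta> x)"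
  by (auto simp: mv_def swp_apply)

lemma window_sum:
  fixes \<phi> :: "int \<Rightarrow> bool \<Rightarrow> 'b::comm_monoid_add"
  assumes "finite W" "finite W'" "Pp \<eta> \<union> Hm \<eta> \<subseteq> W" "Pp \<eta> \<union> Hm \<eta> \<subseteq> W'"
    and z: "\<And>x. 0 \<le> x \<Longrightarrow> \<phi> x False = 0" "\<And>x. x < 0 \<Longrightarrow> \<phi> x True = 0"
  shows "(\<Sum>x\<in>W. \<phi> x (\<eta> x)) = (\<Sum>x\<in>W'. \<phi> x (\<eta> x))"
proof -
  have 0: "\<phi> x (\<eta> x) = 0" if "x \<notin> Pp \<eta> \<union> Hm \<eta>" for x
    using that z by (cases "0 \<le> x") (auto simp: Pp_def Hm_def)
  have "(\<Sum>x\<in>W. \<phi> x (\<eta> x)) = (\<Sum>x\<in>Pp \<eta> \<union> Hm \<eta>. \<phi> x (\<eta> x))"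
    using assms 0 by (intro sum.mono_neutral_right) auto
  also have "\<dots> = (\<Sum>x\<in>W'. \<phi> x (\<eta> x))"
    using assms 0 by (intro sum.mono_neutral_left) auto
  finally show ?thesis .
qed

definition cA :: "int \<Rightarrow> bool \<Rightarrow> int" where
  "cA x b = (if 0 \<le> x then (if b then x else 0) else (if b then 0 else - x))"

definition cD :: "int \<Rightarrow> bool \<Rightarrow> int" where
  "cD x b = (if 0 \<le> x then (if b then 1 else 0) else (if b then 0 else - 1))"

lemma Aa_window:
  assumes "finite W" "Pp \<eta> \<union> Hm \<eta> \<subseteq> W" "finite (Pp \<eta>)" "finite (Hm \<eta>)"
  shows "Aa \<eta> = (\<Sum>x\<in>W. cA x (\<eta> x))"
proof -
  have "(\<Sum>x\<in>W. cA x (\<eta> x)) = (\<Sum>x\<in>Pp \<eta> \<union> Hm \<eta>. cA x (\<eta> x))"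
    by (rule window_sum) (use assms in \<open>auto simp: cA_def\<close>)
  also have "\<dots> = (\<Sum>x\<in>Pp \<eta>. cA x (\<eta> x)) + (\<Sum>x\<in>Hm \<eta>. cA x (\<eta> x))"
    using assms by (intro sum.union_disjoint) (auto simp: Pp_def Hm_def)
  also have "\<dots> = Aa \<eta>"
    unfolding Aa_def by (intro arg_cong2[where f="(+)"] sum.cong) (auto simp: cA_def Pp_def Hm_def)
  finally show ?thesis by simp
qed

lemma cardD_window:
  assumes "finite W" "Pp \<eta> \<union> Hm \<eta> \<subseteq> W" "finite (Pp \<eta>)" "finite (Hm \<eta>)"
  shows "int (card (Pp \<eta>)) - int (card (Hm \<eta>)) = (\<Sum>x\<in>W. cD x (\<eta> x))"
proof -
  have "(\<Sum>x\<in>W. cD x (\<eta> x)) = (\<Sum>x\<in>Pp \<eta> \<union> Hm \<eta>. cD x (\<eta> x))"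
    by (rule window_sum) (use assms in \<open>auto simp: cD_def\<close>)
  also have "\<dots> = (\<Sum>x\<in>Pp \<eta>. cD x (\<eta> x)) + (\<Sum>x\<in>Hm \<eta>. cD x (\<eta> x))"
    using assms by (intro sum.union_disjoint) (auto simp: Pp_def Hm_def)
  also have "(\<Sum>x\<in>Pp \<eta>. cD x (\<eta> x)) = (\<Sum>x\<in>Pp \<eta>. 1)"
    by (intro sum.cong) (auto simp: cD_def Pp_def)
  also have "(\<Sum>x\<in>Hm \<eta>. cD x (\<eta> x)) = (\<Sum>x\<in>Hm \<eta>. -1)"
    by (intro sum.cong) (auto simp: cD_def Hm_def)
  finally show ?thesis by simp
qed

lemma Pp_swp: "Pp (swp \<eta> x) \<subseteq> Pp \<eta> \<union> {x, x+1}"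
  by (auto simp: Pp_def swp_apply split: if_splits)
lemma Hm_swp: "Hm (swp \<eta> x) \<subseteq> Hm \<eta> \<union> {x, x+1}"
  by (auto simp: Hm_def swp_apply split: if_splits)

lemma sum_swp_window:
  fixes \<phi> :: "int \<Rightarrow> bool \<Rightarrow> 'b::ab_group_add"
  assumes "finite W" "{x, x+1} \<subseteq> W"
  shows "(\<Sum>y\<in>W. \<phi> y (swp \<eta> x y)) - (\<Sum>y\<in>W. \<phi> y (\<eta> y)) =
    \<phi> x (\<eta> (x+1)) + \<phi> (x+1) (\<eta> x) - \<phi> x (\<eta> x) - \<phi> (x+1) (\<eta> (x+1))"
proof -
  have s: "(\<Sum>y\<in>W. f y) = f x + f (x+1) + (\<Sum>y\<in>W - {x, x+1}. f y)" for f :: "int \<Rightarrow> 'b"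
  proof -
    have "(\<Sum>y\<in>W. f y) = (\<Sum>y\<in>{x, x+1}. f y) + (\<Sum>y\<in>W - {x, x+1}. f y)"
      using assms by (metis add.commute sum.subset_diff finite_subset)
    then show ?thesis by simp
  qed
  have r: "(\<Sum>y\<in>W - {x, x+1}. \<phi> y (swp \<eta> x y)) = (\<Sum>y\<in>W - {x, x+1}. \<phi> y (\<eta> y))"
    by (intro sum.cong) (auto simp: swp_apply)
  show ?thesis
    by (subst s, subst s[of "\<lambda>y. \<phi> y (\<eta> y)"]) (simp add: r swp_apply algebra_simps)
qed

definition dlt :: "config \<Rightarrow> int \<Rightarrow> int" where
  "dlt \<eta> x = (if \<eta> x then 1 else 0) - (if \<eta> (x+1) then 1 else 0)"

lemma U0_swp:
  assumes "\<eta> \<in> U0"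
  shows "swp \<eta> x \<in> U0 \<and> Aa (swp \<eta> x) = Aa \<eta> + (if x \<in> mv \<eta> then dlt \<eta> x else 0)"
proof -
  let ?\<zeta> = "swp \<eta> x"
  define W where "W = Pp \<eta> \<union> Hm \<eta> \<union> {x, x+1}"
  have f: "finite (Pp \<eta>)" "finite (Hm \<eta>)" using assms by (auto simp: U0_iff)
  have f': "finite (Pp ?\<zeta>)" "finite (Hm ?\<zeta>)"
    using f Pp_swp[of \<eta> x] Hm_swp[of \<eta> x] by (auto intro: finite_subset)
  have W: "finite W" "Pp \<eta> \<union> Hm \<eta> \<subseteq> W" "Pp ?\<zeta> \<union> Hm ?\<zeta> \<subseteq> W" "{x, x+1} \<subseteq> W"
    using f Pp_swp[of \<eta> x] Hm_swp[of \<eta> x] by (auto simp: W_def)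
  have "int (card (Pp ?\<zeta>)) - int (card (Hm ?\<zeta>)) - (int (card (Pp \<eta>)) - int (card (Hm \<eta>))) =
     (\<Sum>y\<in>W. cD y (?\<zeta> y)) - (\<Sum>y\<in>W. cD y (\<eta> y))"
    using cardD_window[OF W(1) W(3) f'] cardD_window[OF W(1) W(2) f] by simp
  also have "\<dots> = 0"
    using sum_swp_window[OF W(1) W(4), of cD \<eta>]
    by (cases "\<eta> x"; cases "\<eta> (x+1)"; cases "0 \<le> x"; cases "x = -1") (auto simp: cD_def)
  finally have c: "card (Pp ?\<zeta>) = card (Hm ?\<zeta>)" using assms by (simp add: U0_iff)
  have "Aa ?\<zeta> - Aa \<eta> = (\<Sum>y\<in>W. cA y (?\<zeta> y)) - (\<Sum>y\<in>W. cA y (\<eta> y))"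
    using Aa_window[OF W(1) W(3) f'] Aa_window[OF W(1) W(2) f] by simp
  also have "\<dots> = (if x \<in> mv \<eta> then dlt \<eta> x else 0)"
    using sum_swp_window[OF W(1) W(4), of cA \<eta>]
    by (cases "\<eta> x"; cases "\<eta> (x+1)"; cases "0 \<le> x"; cases "x = -1") (auto simp: cA_def mv_def dlt_def)
  finally show ?thesis using c f' by (simp add: U0_iff)
qed

lemma mv_subset: "mv \<eta> \<subseteq> Pp \<eta> \<union> (\<lambda>y. y - 1) ` Pp \<eta> \<union> Hm \<eta> \<union> (\<lambda>z. z - 1) ` Hm \<eta> \<union> {-1}"
proof
  fix x assume x: "x \<in> mv \<eta>"
  consider "0 \<le> x" | "x = -1" | "x \<le> -2" by linarith
  then show "x \<in> Pp \<eta> \<union> (\<lambda>y. y - 1) ` Pp \<eta> \<union> Hm \<eta> \<union> (\<lambda>z. z - 1) ` Hm \<eta> \<union> {-1}"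
  proof cases
    case 1
    show ?thesis
    proof (cases "\<eta> x")
      case True then show ?thesis using 1 by (simp add: Pp_def)
    next
      case False
      then have "x + 1 \<in> Pp \<eta>" using x 1 by (simp add: mv_def Pp_def)
      then have "x \<in> (\<lambda>y. y - 1) ` Pp \<eta>" by (rule image_eqI[rotated]) simp
      then show ?thesis by blast
    qed
  next
    case 3
    show ?thesis
    proof (cases "\<eta> x")
      case False then show ?thesis using 3 by (simp add: Hm_def)
    next
      case True
      then have "x + 1 \<in> Hm \<eta>" using x 3 by (simp add: mv_def Hm_def)
      then have "x \<in> (\<lambda>y. y - 1) ` Hm \<eta>" by (rule image_eqI[rotated]) simp
      then show ?thesis by blast
    qed
  qed simp
qed

lemma mv_finite_card:
  assumes "\<eta> \<in> U0"
  shows "finite (mv \<eta>) \<and> card (mv \<eta>) \<le> 4 * card (Pp \<eta>) + 1"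
proof -
  have f: "finite (Pp \<eta>)" "finite (Hm \<eta>)" and c: "card (Pp \<eta>) = card (Hm \<eta>)"
    using assms by (auto simp: U0_iff)
  let ?S = "Pp \<eta> \<union> (\<lambda>y. y - 1) ` Pp \<eta> \<union> Hm \<eta> \<union> (\<lambda>z. z - 1) ` Hm \<eta> \<union> {-1}"
  have fS: "finite ?S" using f by auto
  have "card ?S \<le> card (Pp \<eta>) + card ((\<lambda>y. y - 1) ` Pp \<eta>) + card (Hm \<eta>) + card ((\<lambda>z. z - 1) ` Hm \<eta>) + card {-1::int}"
    by (intro order.trans[OF card_Un_le] add_mono order_refl)
  also have "\<dots> \<le> 4 * card (Pp \<eta>) + 1"
    using card_image_le[OF f(1), of "\<lambda>y. y - 1"] card_image_le[OF f(2), of "\<lambda>y. y - 1"] c by simp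
  finally show ?thesis using mv_subset[of \<eta>] fS
    by (meson card_mono finite_subset order_trans)
qed

lemma telescope_int:
  fixes f :: "int \<Rightarrow> int"
  shows "(\<Sum>x\<in>{a..<a + int n}. f x - f (x+1)) = f a - f (a + int n)"
proof (induction n)
  case (Suc n)
  have "{a..<a + int (Suc n)} = insert (a + int n) {a..<a + int n}" by auto
  then show ?case using Suc by (simp add: algebra_simps)
qed simp

lemma sum_dlt:
  assumes "\<eta> \<in> U0"
  shows "(\<Sum>x\<in>mv \<eta>. dlt \<eta> x) = 1"
proof -
  have f: "finite (Pp \<eta>)" "finite (Hm \<eta>)" using assms by (auto simp: U0_iff)
  obtain a where a: "a < 0" "\<And>z. z \<in> Hm \<eta> \<Longrightarrow> a < z"
  proof -
    have "finite (insert 0 (Hm \<eta>))" using f by simp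
    then obtain m where "\<And>z. z \<in> insert 0 (Hm \<eta>) \<Longrightarrow> m \<le> z"
      by (metis finite_has_minimal2 insertI1 order.refl order_trans  linorder_le_cases
          Min_le finite.insertI)
    then show ?thesis by (intro that[of "m - 1"]) force+
  qed
  obtain b where b: "0 \<le> b" "\<And>z. z \<in> Pp \<eta> \<Longrightarrow> z < b"
  proof -
    have "finite (insert 0 (Pp \<eta>))" using f by simp
    then obtain m where "\<And>z. z \<in> insert 0 (Pp \<eta>) \<Longrightarrow> z \<le> m"
      by (metis Max_ge)
    then show ?thesis by (intro that[of "m + 1"]) force+
  qed
  have ta: "\<eta> x" if "x \<le> a" for x
  proof (rule ccontr)
    assume "\<not> \<eta> x"
    then have "x \<in> Hm \<eta>" using that a by (simp add: Hm_def)
    then show False using a(2) that by force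
  qed
  have tb: "\<not> \<eta> x" if "b \<le> x" for x
  proof
    assume "\<eta> x"
    then have "x \<in> Pp \<eta>" using that b by (simp add: Pp_def)
    then show False using b(2) that by force
  qed
  have sub: "mv \<eta> \<subseteq> {a..<b}"
  proof
    fix x assume "x \<in> mv \<eta>"
    then have "\<eta> x \<noteq> \<eta> (x+1)" by (simp add: mv_def)
    then show "x \<in> {a..<b}" using ta[of x] ta[of "x+1"] tb[of x] tb[of "x+1"] by force
  qed
  have "(\<Sum>x\<in>mv \<eta>. dlt \<eta> x) = (\<Sum>x\<in>{a..<b}. dlt \<eta> x)"
    using sub by (intro sum.mono_neutral_left) (auto simp: mv_def dlt_def)
  also have "{a..<b} = {a..<a + int (nat (b - a))}" using a b by simp
  also have "(\<Sum>x\<in>\<dots>. dlt \<eta> x) = 1"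
    using telescope_int[of "\<lambda>x. if \<eta> x then 1 else 0" a "nat (b-a)"] ta[of a] tb[of b] a b
    by (simp add: dlt_def)
  finally show ?thesis .
qed

lemma sum_set_lb:
  fixes S :: "int set"
  assumes "finite S" "\<And>x. x \<in> S \<Longrightarrow> 0 \<le> x"
  shows "int (card S) * (int (card S) - 1) \<le> 2 * (\<Sum>S)"
  using assms
proof (induction "card S" arbitrary: S)
  case 0 then show ?case by (simp add: sum_nonneg)
next
  case (Suc n)
  then have ne: "S \<noteq> {}" by auto
  define m where "m = Max S"
  have mS: "m \<in> S" using Suc ne by (simp add: m_def)
  have sub: "S \<subseteq> {0..m}" using Suc by (auto simp: m_def)
  have "card S \<le> card {0..m}" using sub by (intro card_mono) auto
  then have cm: "int (card S) \<le> m + 1" using mS Suc(4)[OF mS] by simp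
  have cS': "card (S - {m}) = n" using Suc mS by simp
  have IH: "int n * (int n - 1) \<le> 2 * \<Sum>(S - {m})"
    using Suc(1)[of "S - {m}"] cS' Suc(3,4) by auto
  have "\<Sum>S = m + \<Sum>(S - {m})" using Suc mS by (simp add: sum.remove)
  then show ?case using IH cm Suc(2)[symmetric] by (simp add: algebra_simps)
qed

lemma Aa_lb:
  assumes "\<eta> \<in> U0"
  shows "int (card (Pp \<eta>)) ^ 2 \<le> Aa \<eta>"
proof -
  have f: "finite (Pp \<eta>)" "finite (Hm \<eta>)" and c: "card (Pp \<eta>) = card (Hm \<eta>)"
    using assms by (auto simp: U0_iff)
  define k where "k = int (card (Pp \<eta>))"
  have 1: "k * (k - 1) \<le> 2 * (\<Sum>y\<in>Pp \<eta>. y)"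
    unfolding k_def by (rule sum_set_lb) (use f in \<open>auto simp: Pp_def\<close>)
  have inj: "inj_on (\<lambda>z. - z - 1) (Hm \<eta>)" by (auto simp: inj_on_def)
  have ci: "card ((\<lambda>z. - z - 1) ` Hm \<eta>) = card (Hm \<eta>)" using card_image[OF inj] .
  have 2: "k * (k - 1) \<le> 2 * \<Sum>((\<lambda>z. - z - 1) ` Hm \<eta>)"
    unfolding k_def c ci[symmetric] by (rule sum_set_lb) (use f in \<open>auto simp: Hm_def\<close>)
  have "\<Sum>((\<lambda>z. - z - 1) ` Hm \<eta>) = (\<Sum>z\<in>Hm \<eta>. - z - 1)"
    by (simp add: sum.reindex[OF inj])
  also have "\<dots> = (\<Sum>z\<in>Hm \<eta>. - z) - k" using c by (simp add: sum_subtractf k_def)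
  finally show ?thesis using 1 2 unfolding Aa_def k_def[symmetric] by (simp add: power2_eq_square algebra_simps)
qed

lemma Aa_nonneg: "\<eta> \<in> U0 \<Longrightarrow> 0 \<le> Aa \<eta>"
proof -
  assume "\<eta> \<in> U0"
  from Aa_lb[OF this] show ?thesis by (meson order_trans zero_le_power2)
qed

lemma card_mv_bound:
  assumes "\<eta> \<in> U0"
  shows "real (card (mv \<eta>)) / 2 \<le> 2 * sqrt (real_of_int (Aa \<eta>)) + 1"
proof -
  have "real (card (Pp \<eta>)) \<le> sqrt (real_of_int (Aa \<eta>))"
    using Aa_lb[OF assms] by (metis of_int_le_iff of_int_of_nat_eq of_int_power real_le_rsqrt)
  then show ?thesis using mv_finite_card[OF assms] by simp
qed

lemma PH_Ostep: "Pp Ostep = {}" "Hm Ostep = {}"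
  by (auto simp: Pp_def Hm_def Ostep_def)

lemma Ostep_U0: "Ostep \<in> U0" and Aa_Ostep: "Aa Ostep = 0"
  by (auto simp: U0_iff PH_Ostep Aa_def)

abbreviation "q \<equiv> qtot (1/2)"
abbreviation "P n \<eta> t \<equiv> pn (1/2) n \<eta> t"

lemma preds_eq: "preds \<eta> = swp \<eta> ` mv \<eta>"
  by (simp add: preds_def mv_def)

lemma swp_triv: "x \<notin> mv \<eta> \<Longrightarrow> swp \<eta> x = \<eta>"
  by (rule ext) (auto simp: swp_apply mv_def)

lemma swp_inj:
  assumes "x \<in> mv \<eta>" "swp \<eta> y = swp \<eta> x"
  shows "y = x"
proof -
  have "swp \<eta> y x \<noteq> \<eta> x" "swp \<eta> y (x+1) \<noteq> \<eta> (x+1)"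
    using assms by (auto simp: swp_apply mv_def)
  then show ?thesis by (auto simp: swp_apply split: if_splits)
qed

lemma inj_swp: "inj_on (swp \<eta>) (mv \<eta>)"
  using swp_inj by (metis inj_onI)

lemma preds_sym: "\<zeta> \<in> preds \<eta> \<Longrightarrow> \<eta> \<in> preds \<zeta>"
proof -
  assume "\<zeta> \<in> preds \<eta>"
  then obtain x where x: "x \<in> mv \<eta>" "\<zeta> = swp \<eta> x" by (auto simp: preds_eq)
  then have "x \<in> mv \<zeta>" "\<eta> = swp \<zeta> x" using mv_swp swp_swp by auto
  then show ?thesis unfolding preds_eq by (rule rev_image_eqI)
qed

lemma rate_half:
  assumes "\<zeta> \<in> preds \<eta>"
  shows "rate (1/2) \<zeta> \<eta> = 1/2"
proof -
  obtain x where xz: "x \<in> mv \<zeta>" and e: "\<eta> = swp \<zeta> x"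
  proof -
    obtain x where x: "x \<in> mv \<eta>" "\<zeta> = swp \<eta> x" using assms by (auto simp: preds_eq)
    then have "x \<in> mv \<zeta>" "\<eta> = swp \<zeta> x" using mv_swp swp_swp by auto
    then show ?thesis using that by blast
  qed
  have u: "y = x" if "swp \<zeta> y = swp \<zeta> x" for y using swp_inj[OF xz] that by simp
  have c1: "(\<exists>y. \<zeta> y \<and> \<not> \<zeta> (y+1) \<and> \<eta> = swp \<zeta> y) \<longleftrightarrow> \<zeta> x"
    unfolding e using u xz by (auto simp: mv_def)
  have c2: "(\<exists>y. \<not> \<zeta> y \<and> \<zeta> (y+1) \<and> \<eta> = swp \<zeta> y) \<longleftrightarrow> \<not> \<zeta> x"
    unfolding e using u xz by (auto simp: mv_def)
  show ?thesis unfolding rate_def c1 c2 by simp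
qed

lemma qtot_half:
  assumes "\<eta> \<in> U0"
  shows "q \<eta> = real (card (mv \<eta>)) / 2"
proof -
  have f: "finite (mv \<eta>)" using mv_finite_card[OF assms] by simp
  have "mv \<eta> = {x. \<eta> x \<and> \<not> \<eta> (x+1)} \<union> {x. \<not> \<eta> x \<and> \<eta> (x+1)}" by (auto simp: mv_def)
  moreover have "finite {x. \<eta> x \<and> \<not> \<eta> (x+1)}" "finite {x. \<not> \<eta> x \<and> \<eta> (x+1)}"
    using f by (auto intro: rev_finite_subset simp: mv_def)
  ultimately have "card (mv \<eta>) = card {x. \<eta> x \<and> \<not> \<eta> (x+1)} + card {x. \<not> \<eta> x \<and> \<eta> (x+1)}"
    by (simp add: card_Un_disjoint disjoint_iff)
  then show ?thesis by (simp add: qtot_def)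
qed

lemma q_nonneg: "\<eta> \<in> U0 \<Longrightarrow> 0 \<le> q \<eta>"
  by (simp add: qtot_half)

lemma finite_preds: "\<eta> \<in> U0 \<Longrightarrow> finite (preds \<eta>)"
  using mv_finite_card by (simp add: preds_eq)

lemma sum_preds: "(\<Sum>\<zeta>\<in>preds \<eta>. f \<zeta>) = (\<Sum>x\<in>mv \<eta>. f (swp \<eta> x))"
  by (simp add: preds_eq sum.reindex[OF inj_swp])

lemma card_preds: "card (preds \<eta>) = card (mv \<eta>)"
  by (simp add: preds_eq card_image[OF inj_swp])

lemma pn_Suc_half:
  "P (Suc n) \<eta> t = integral {0..t} (\<lambda>s. (\<Sum>\<zeta>\<in>preds \<eta>. P n \<zeta> s) / 2 * exp (- q \<eta> * (t - s)))"
proof -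
  have h: "(\<Sum>\<zeta>\<in>preds \<eta>. P n \<zeta> s * rate (1/2) \<zeta> \<eta>) = (\<Sum>\<zeta>\<in>preds \<eta>. P n \<zeta> s) / 2" for s
    by (simp add: rate_half sum_divide_distrib)
  show ?thesis by (simp only: pn.simps h)
qed

fun R :: "nat \<Rightarrow> config set" where
  "R 0 = {Ostep}"
| "R (Suc n) = (\<Union>\<zeta>\<in>R n. preds \<zeta>)"

lemma R_U0: "R n \<subseteq> U0"
proof (induction n)
  case 0 then show ?case using Ostep_U0 by simp
next
  case (Suc n) then show ?case using U0_swp by (auto simp: preds_eq)
qed

lemma R_finite: "finite (R n)"
  by (induction n) (use R_U0 finite_preds in auto)

lemma R_Aa: "\<eta> \<in> R n \<Longrightarrow> Aa \<eta> \<le> int n"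
proof (induction n arbitrary: \<eta>)
  case 0 then show ?case by (simp add: Aa_Ostep)
next
  case (Suc n)
  then obtain \<zeta> x where z: "\<zeta> \<in> R n" "x \<in> mv \<zeta>" "\<eta> = swp \<zeta> x" by (auto simp: preds_eq)
  then have "Aa \<eta> = Aa \<zeta> + dlt \<zeta> x" using U0_swp[of \<zeta> x] R_U0 by auto
  moreover have "dlt \<zeta> x \<le> 1" by (simp add: dlt_def)
  ultimately show ?case using Suc.IH[OF z(1)] by simp
qed

lemma pn_zero: "\<eta> \<notin> R n \<Longrightarrow> P n \<eta> t = 0"
proof (induction n arbitrary: \<eta> t)
  case 0 then show ?case by simp
next
  case (Suc n)
  have "P n \<zeta> s = 0" if "\<zeta> \<in> preds \<eta>" for \<zeta> s
  proof -
    have "\<zeta> \<notin> R n" using Suc.prems preds_sym[OF that] by auto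
    then show ?thesis using Suc.IH by simp
  qed
  then show ?case by (simp add: pn_Suc_half)
qed

definition Fs :: "nat \<Rightarrow> config \<Rightarrow> real \<Rightarrow> real" where
  "Fs n \<eta> t = (case n of 0 \<Rightarrow> 0 | Suc m \<Rightarrow> (\<Sum>\<zeta>\<in>preds \<eta>. P m \<zeta> t) / 2)"

lemma pn_Suc_exp:
  "P (Suc n) \<eta> t = exp (- q \<eta> * t) * integral {0..t} (\<lambda>s. Fs (Suc n) \<eta> s * exp (q \<eta> * s))"
proof -
  have "(\<lambda>s. (\<Sum>\<zeta>\<in>preds \<eta>. P n \<zeta> s) / 2 * exp (- q \<eta> * (t - s))) =
        (\<lambda>s. exp (- q \<eta> * t) * (Fs (Suc n) \<eta> s * exp (q \<eta> * s)))"
    by (rule ext) (simp add: Fs_def mult_exp_exp algebra_simps)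
  then show ?thesis by (simp only: pn_Suc_half) simp
qed

lemma pn_props:
  "(\<forall>T. continuous_on {0..T} (P n \<eta>)) \<and> (\<forall>t. 0 \<le> P n \<eta> t) \<and>
   (\<forall>t>0. (P n \<eta> has_real_derivative (Fs n \<eta> t - q \<eta> * P n \<eta> t)) (at t))"
proof (induction n arbitrary: \<eta>)
  case 0
  show ?case
  proof (cases "\<eta> = Ostep")
    case True
    have "((\<lambda>t. exp (- q \<eta> * t)) has_real_derivative (- q \<eta> * exp (- q \<eta> * t))) (at t)" for t
      by (auto intro!: derivative_eq_intros)
    then show ?thesis using True by (auto simp: Fs_def intro!: continuous_intros)
  qed (simp add: Fs_def)
next
  case (Suc n)
  define F where "F = Fs (Suc n) \<eta>"
  define g where "g = (\<lambda>s. F s * exp (q \<eta> * s))"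
  have Fc: "continuous_on {0..T} F" for T
    unfolding F_def Fs_def using Suc.IH by (auto intro!: continuous_intros)
  have Fn: "0 \<le> F s" for s
    unfolding F_def Fs_def using Suc.IH by (auto intro!: sum_nonneg)
  have gc: "continuous_on {0..T} g" for T
    unfolding g_def using Fc by (auto intro!: continuous_intros)
  have e: "P (Suc n) \<eta> = (\<lambda>t. exp (- q \<eta> * t) * integral {0..t} g)"
    unfolding g_def F_def by (rule ext, rule pn_Suc_exp)
  have c: "continuous_on {0..T} (P (Suc n) \<eta>)" for T
    unfolding e
    by (intro continuous_intros indefinite_integral_continuous_1 integrable_continuous_real gc)
  have nn: "0 \<le> P (Suc n) \<eta> t" for t
  proof (cases "0 \<le> t")
    case True
    have "0 \<le> integral {0..t} g"
      by (rule integral_nonneg) (use gc Fn in \<open>auto simp: g_def intro!: integrable_continuous_real\<close>)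
    then show ?thesis unfolding e by simp
  next
    case False
    then show ?thesis unfolding e by simp
  qed
  have d: "(P (Suc n) \<eta> has_real_derivative (Fs (Suc n) \<eta> t - q \<eta> * P (Suc n) \<eta> t)) (at t)"
    if t: "t > 0" for t
  proof -
    have "((\<lambda>x. integral {0..x} g) has_real_derivative g t) (at t within {0..t+1})"
      by (rule integral_has_real_derivative) (use gc t in auto)
    moreover have "at t within {0..t+1} = at t"
      by (rule at_within_interior) (use t in auto)
    ultimately have G: "((\<lambda>x. integral {0..x} g) has_real_derivative g t) (at t)" by simp
    have "((\<lambda>t. exp (- q \<eta> * t) * integral {0..t} g) has_real_derivative
       (exp (- q \<eta> * t) * (- q \<eta>) * integral {0..t} g + exp (- q \<eta> * t) * g t)) (at t)"
      by (auto intro!: derivative_eq_intros G)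
    moreover have "exp (- q \<eta> * t) * (- q \<eta>) * integral {0..t} g + exp (- q \<eta> * t) * g t
        = Fs (Suc n) \<eta> t - q \<eta> * P (Suc n) \<eta> t"
      unfolding e g_def F_def by (simp add: algebra_simps mult_exp_exp)
    ultimately show ?thesis unfolding e by (simp add: algebra_simps)
  qed
  show ?case using c nn d by blast
qed

lemma pn_nonneg: "0 \<le> P n \<eta> t" using pn_props by blast
lemma pn_cont: "continuous_on {0..T} (P n \<eta>)" using pn_props by blast
lemma pn_deriv: "t > 0 \<Longrightarrow> (P n \<eta> has_real_derivative (Fs n \<eta> t - q \<eta> * P n \<eta> t)) (at t)"
  using pn_props by blast

lemma pn_at0: "P n \<eta> 0 = (if n = 0 \<and> \<eta> = Ostep then 1 else 0)"
  by (cases n) (auto simp: pn_Suc_exp)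

definition E :: "nat \<Rightarrow> real \<Rightarrow> (config \<Rightarrow> real) \<Rightarrow> real" where
  "E N t f = (\<Sum>n<N. \<Sum>\<eta>\<in>R n. P n \<eta> t * f \<eta>)"

definition B :: "nat \<Rightarrow> real \<Rightarrow> (config \<Rightarrow> real) \<Rightarrow> real" where
  "B N t f = (\<Sum>\<eta>\<in>R N. P N \<eta> t * q \<eta> * f \<eta>)"

definition L :: "(config \<Rightarrow> real) \<Rightarrow> config \<Rightarrow> real" where
  "L f \<zeta> = (\<Sum>x\<in>mv \<zeta>. f (swp \<zeta> x) - f \<zeta>) / 2"

lemma preds_sym_iff: "\<zeta> \<in> preds \<eta> \<longleftrightarrow> \<eta> \<in> preds \<zeta>"
  using preds_sym by blast

lemma swap_id:
  "(\<Sum>\<eta>\<in>R (Suc m). Fs (Suc m) \<eta> t * f \<eta>) = (\<Sum>\<zeta>\<in>R m. P m \<zeta> t * ((\<Sum>\<eta>\<in>preds \<zeta>. f \<eta>) / 2))"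
proof -
  have 1: "Fs (Suc m) \<eta> t * f \<eta> = (\<Sum>\<zeta>\<in>{\<zeta>\<in>R m. \<eta> \<in> preds \<zeta>}. P m \<zeta> t * f \<eta> / 2)"
    if "\<eta> \<in> R (Suc m)" for \<eta>
  proof -
    have fp: "finite (preds \<eta>)" using that R_U0 finite_preds by blast
    have "(\<Sum>\<zeta>\<in>preds \<eta>. P m \<zeta> t) = (\<Sum>\<zeta>\<in>{\<zeta>\<in>R m. \<eta> \<in> preds \<zeta>}. P m \<zeta> t)"
    proof (rule sum.mono_neutral_right)
      show "{\<zeta>\<in>R m. \<eta> \<in> preds \<zeta>} \<subseteq> preds \<eta>" using preds_sym by blast
      show "\<forall>i\<in>preds \<eta> - {\<zeta>\<in>R m. \<eta> \<in> preds \<zeta>}. P m i t = 0"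
        using preds_sym pn_zero by blast
    qed (use fp in auto)
    then show ?thesis by (simp add: Fs_def sum_divide_distrib sum_distrib_right)
  qed
  have "(\<Sum>\<eta>\<in>R (Suc m). Fs (Suc m) \<eta> t * f \<eta>) =
        (\<Sum>\<eta>\<in>R (Suc m). \<Sum>\<zeta>\<in>{\<zeta>\<in>R m. \<eta> \<in> preds \<zeta>}. P m \<zeta> t * f \<eta> / 2)"
    using 1 by (rule sum.cong[OF refl])
  also have "\<dots> = (\<Sum>\<zeta>\<in>R m. \<Sum>\<eta>\<in>{\<eta>\<in>R (Suc m). \<eta> \<in> preds \<zeta>}. P m \<zeta> t * f \<eta> / 2)"
    by (rule sum.swap_restrict) (rule R_finite)+
  also have "\<dots> = (\<Sum>\<zeta>\<in>R m. \<Sum>\<eta>\<in>preds \<zeta>. P m \<zeta> t * f \<eta> / 2)"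
  proof (rule sum.cong[OF refl])
    fix \<zeta> assume "\<zeta> \<in> R m"
    then have "{\<eta>\<in>R (Suc m). \<eta> \<in> preds \<zeta>} = preds \<zeta>" by auto
    then show "(\<Sum>\<eta>\<in>{\<eta>\<in>R (Suc m). \<eta> \<in> preds \<zeta>}. P m \<zeta> t * f \<eta> / 2) = (\<Sum>\<eta>\<in>preds \<zeta>. P m \<zeta> t * f \<eta> / 2)"
      by simp
  qed
  also have "\<dots> = (\<Sum>\<zeta>\<in>R m. P m \<zeta> t * ((\<Sum>\<eta>\<in>preds \<zeta>. f \<eta>) / 2))"
    by (simp add: sum_divide_distrib sum_distrib_left)
  finally show ?thesis .
qed

lemma L_local:
  assumes "\<zeta> \<in> U0"
  shows "(\<Sum>\<eta>\<in>preds \<zeta>. f \<eta>) / 2 - q \<zeta> * f \<zeta> = L f \<zeta>"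
proof -
  have fm: "finite (mv \<zeta>)" using mv_finite_card[OF assms] by simp
  show ?thesis
    unfolding L_def sum_preds qtot_half[OF assms] using fm
    by (simp add: sum_subtractf field_simps)
qed

lemma E_deriv:
  assumes "t > 0"
  shows "((\<lambda>t. E (Suc N) t f) has_real_derivative (E N t (L f) - B N t f)) (at t)"
proof -
  have d: "((\<lambda>t. E (Suc N) t f) has_real_derivative
      (\<Sum>n<Suc N. \<Sum>\<eta>\<in>R n. (Fs n \<eta> t - q \<eta> * P n \<eta> t) * f \<eta>)) (at t)"
    unfolding E_def by (intro DERIV_sum DERIV_cmult_right pn_deriv assms)
  have s1: "(\<Sum>n<Suc N. \<Sum>\<eta>\<in>R n. Fs n \<eta> t * f \<eta>) =
            (\<Sum>n<N. \<Sum>\<zeta>\<in>R n. P n \<zeta> t * ((\<Sum>\<eta>\<in>preds \<zeta>. f \<eta>) / 2))"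
    by (simp only: sum.lessThan_Suc_shift swap_id) (simp add: Fs_def)
  have s2: "(\<Sum>n<Suc N. \<Sum>\<eta>\<in>R n. q \<eta> * P n \<eta> t * f \<eta>) =
            (\<Sum>n<N. \<Sum>\<zeta>\<in>R n. P n \<zeta> t * (q \<zeta> * f \<zeta>)) + B N t f"
    by (simp add: B_def algebra_simps)
  have s3: "(\<Sum>n<N. \<Sum>\<zeta>\<in>R n. P n \<zeta> t * ((\<Sum>\<eta>\<in>preds \<zeta>. f \<eta>) / 2)) -
            (\<Sum>n<N. \<Sum>\<zeta>\<in>R n. P n \<zeta> t * (q \<zeta> * f \<zeta>)) = E N t (L f)"
    unfolding E_def sum_subtractf[symmetric]
  proof (intro sum.cong refl)
    fix n \<zeta> assume "\<zeta> \<in> R n"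
    then have "\<zeta> \<in> U0" using R_U0 by blast
    then show "P n \<zeta> t * ((\<Sum>\<eta>\<in>preds \<zeta>. f \<eta>) / 2) - P n \<zeta> t * (q \<zeta> * f \<zeta>) = P n \<zeta> t * L f \<zeta>"
      using L_local[of \<zeta> f] by (metis right_diff_distrib times_divide_eq_right)
  qed
  have "(\<Sum>n<Suc N. \<Sum>\<eta>\<in>R n. (Fs n \<eta> t - q \<eta> * P n \<eta> t) * f \<eta>) =
        (\<Sum>n<Suc N. \<Sum>\<eta>\<in>R n. Fs n \<eta> t * f \<eta>) - (\<Sum>n<Suc N. \<Sum>\<eta>\<in>R n. q \<eta> * P n \<eta> t * f \<eta>)"
    by (simp add: sum_subtractf left_diff_distrib)
  also have "\<dots> = E N t (L f) - B N t f" using s1 s2 s3 by simp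
  finally show ?thesis using d by simp
qed

lemma E_cont: "continuous_on {0..T} (\<lambda>t. E N t f)"
  unfolding E_def by (intro continuous_intros pn_cont)

lemma E_at0: "E (Suc N) 0 f = f Ostep"
proof -
  have "(\<Sum>n<Suc N. \<Sum>\<eta>\<in>R n. P n \<eta> 0 * f \<eta>) = (\<Sum>n<Suc N. if n = 0 then f Ostep else 0)"
    by (intro sum.cong refl) (auto simp: pn_at0)
  then show ?thesis unfolding E_def by (simp add: sum.delta)
qed

lemma E_mono: "(\<And>\<eta>. \<eta> \<in> U0 \<Longrightarrow> f \<eta> \<le> g \<eta>) \<Longrightarrow> E N t f \<le> E N t g"
  unfolding E_def using R_U0 by (intro sum_mono mult_left_mono pn_nonneg) (auto intro: pn_nonneg)

lemma E_nonneg: "(\<And>\<eta>. \<eta> \<in> U0 \<Longrightarrow> 0 \<le> f \<eta>) \<Longrightarrow> 0 \<le> E N t f"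
  unfolding E_def using R_U0 by (intro sum_nonneg mult_nonneg_nonneg pn_nonneg) auto

lemma B_nonneg: "(\<And>\<eta>. \<eta> \<in> U0 \<Longrightarrow> 0 \<le> f \<eta>) \<Longrightarrow> 0 \<le> B N t f"
  unfolding B_def using R_U0 by (intro sum_nonneg mult_nonneg_nonneg pn_nonneg q_nonneg) auto

lemma E_add: "E N t (\<lambda>\<eta>. f \<eta> + g \<eta>) = E N t f + E N t g"
  unfolding E_def by (simp add: distrib_left sum.distrib)
lemma E_cmult: "E N t (\<lambda>\<eta>. c * f \<eta>) = c * E N t f"
  unfolding E_def by (simp add: sum_distrib_left algebra_simps)
lemma E_diff: "E N t (\<lambda>\<eta>. f \<eta> - g \<eta>) = E N t f - E N t g"
  unfolding E_def by (simp add: right_diff_distrib sum_subtractf)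
lemma E_const: "E N t (\<lambda>\<eta>. c) = c * E N t (\<lambda>_. 1)"
  using E_cmult[of N t c "\<lambda>_. 1"] by simp

lemma deriv_cmp:
  fixes g h g' h' :: "real \<Rightarrow> real"
  assumes "0 \<le> T" "continuous_on {0..T} g" "continuous_on {0..T} h"
    "\<And>t. 0 < t \<Longrightarrow> t < T \<Longrightarrow> (g has_real_derivative g' t) (at t)"
    "\<And>t. 0 < t \<Longrightarrow> t < T \<Longrightarrow> (h has_real_derivative h' t) (at t)"
    "\<And>t. 0 < t \<Longrightarrow> t < T \<Longrightarrow> g' t \<le> h' t"
  shows "g T - g 0 \<le> h T - h 0"
proof -
  have "(\<lambda>t. g t - h t) 0 \<ge> (\<lambda>t. g t - h t) T"
  proof (rule DERIV_nonpos_imp_decreasing_open[OF assms(1)])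
    fix t assume t: "0 < t" "t < T"
    show "\<exists>y. ((\<lambda>t. g t - h t) has_real_derivative y) (at t) \<and> y \<le> 0"
      using assms(4-6)[OF t] by (intro exI[of _ "g' t - h' t"]) (auto intro!: derivative_eq_intros)
  next
    show "continuous_on {0..T} (\<lambda>t. g t - h t)" using assms(2,3) by (intro continuous_intros)
  qed
  then show ?thesis by simp
qed

definition ARe :: "config \<Rightarrow> real" where "ARe \<eta> = real_of_int (Aa \<eta>)"

lemma E0: "E 0 t f = 0" by (simp add: E_def)

lemma L_one: "L (\<lambda>_. 1) \<zeta> = 0" by (simp add: L_def)

lemma E_one_le: "0 \<le> t \<Longrightarrow> E N t (\<lambda>_. 1) \<le> 1"
proof (cases N)
  case 0 then show ?thesis by (simp add: E0)
next
  case (Suc M)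
  assume t: "0 \<le> t"
  have "E (Suc M) t (\<lambda>_. 1) - E (Suc M) 0 (\<lambda>_. 1) \<le> (\<lambda>_. 0::real) t - (\<lambda>_. 0) 0"
  proof (rule deriv_cmp[OF t E_cont continuous_on_const])
    fix s :: real assume s: "0 < s" "s < t"
    show "((\<lambda>t. E (Suc M) t (\<lambda>_. 1)) has_real_derivative (E M s (L (\<lambda>_. 1)) - B M s (\<lambda>_. 1))) (at s)"
      using E_deriv s by blast
    show "((\<lambda>_. 0) has_real_derivative 0) (at s)" by simp
    show "E M s (L (\<lambda>_. 1)) - B M s (\<lambda>_. 1) \<le> 0"
      using B_nonneg[of "\<lambda>_. 1" M s] by (simp add: L_one E_def)
  qed
  then show ?thesis using Suc E_at0[of M "\<lambda>_. 1"] by simp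
qed

definition mm :: "nat \<Rightarrow> real \<Rightarrow> real" where "mm N t = (\<Sum>\<eta>\<in>R N. P N \<eta> t)"
definition Qb :: "nat \<Rightarrow> real" where "Qb N = 2 * sqrt (real N) + 1"
definition Kb :: "nat \<Rightarrow> real" where "Kb N = 3 ^ N * sqrt (fact N)"

lemma mm_E: "mm N t = E (Suc N) t (\<lambda>_. 1) - E N t (\<lambda>_. 1)"
  by (simp add: mm_def E_def)

lemma q_R: "\<eta> \<in> R N \<Longrightarrow> q \<eta> \<le> Qb N"
proof -
  assume h: "\<eta> \<in> R N"
  then have u: "\<eta> \<in> U0" using R_U0 by blast
  have "q \<eta> \<le> 2 * sqrt (real_of_int (Aa \<eta>)) + 1"
    using card_mv_bound[OF u] qtot_half[OF u] by simp
  also have "\<dots> \<le> Qb N" unfolding Qb_def using R_Aa[OF h] by simp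
  finally show ?thesis .
qed

lemma B_one_le: "0 \<le> t \<Longrightarrow> B N t (\<lambda>_. 1) \<le> Qb N * mm N t"
  unfolding B_def mm_def sum_distrib_left
  by (intro sum_mono) (simp add: mult.commute[of "Qb N"] mult_left_mono q_R pn_nonneg)

lemma mm_nonneg: "0 \<le> mm N t"
  unfolding mm_def by (intro sum_nonneg pn_nonneg)

lemma mm_cont: "continuous_on {0..T} (mm N)"
  unfolding mm_def by (intro continuous_intros pn_cont)

lemma mm_deriv: "0 < t \<Longrightarrow> (mm (Suc N) has_real_derivative (B N t (\<lambda>_. 1) - B (Suc N) t (\<lambda>_. 1))) (at t)"
proof -
  assume t: "0 < t"
  have "((\<lambda>t. E (Suc (Suc N)) t (\<lambda>_. 1) - E (Suc N) t (\<lambda>_. 1)) has_real_derivative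
     ((E (Suc N) t (L (\<lambda>_. 1)) - B (Suc N) t (\<lambda>_. 1)) - (E N t (L (\<lambda>_. 1)) - B N t (\<lambda>_. 1)))) (at t)"
    by (intro DERIV_diff E_deriv t)
  moreover have "mm (Suc N) = (\<lambda>t. E (Suc (Suc N)) t (\<lambda>_. 1) - E (Suc N) t (\<lambda>_. 1))"
    by (rule ext) (simp add: mm_E)
  ultimately show ?thesis by (simp add: L_one E_def)
qed

lemma Qb_le: "Qb N * Kb N \<le> Kb (Suc N)"
proof -
  have "2 * sqrt (real N) + 1 \<le> 3 * sqrt (real N + 1)"
  proof -
    have "sqrt (real N) \<le> sqrt (real N + 1)" by simp
    moreover have "1 \<le> sqrt (real N + 1)" by simp
    ultimately show ?thesis by linarith
  qed
  moreover have "sqrt (fact (Suc N)) = sqrt (real N + 1) * sqrt (fact N)"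
    by (simp add: real_sqrt_mult[symmetric] algebra_simps)
  moreover have "0 \<le> Kb N" by (simp add: Kb_def)
  ultimately have "(2 * sqrt (real N) + 1) * Kb N \<le> 3 * sqrt (real N + 1) * Kb N"
    by (intro mult_right_mono) auto
  also have "\<dots> = Kb (Suc N)" unfolding Kb_def
    using \<open>sqrt (fact (Suc N)) = sqrt (real N + 1) * sqrt (fact N)\<close> by simp
  finally show ?thesis unfolding Qb_def .
qed

lemma mm_bound: "0 \<le> t \<Longrightarrow> mm N t \<le> Kb N * t ^ N / fact N"
proof (induction N arbitrary: t)
  case 0
  then show ?case using E_one_le[of t 1] by (simp add: mm_E E0 Kb_def)
next
  case (Suc N)
  have m0: "mm (Suc N) 0 = 0" by (simp add: mm_def pn_at0)
  have "mm (Suc N) t - mm (Suc N) 0 \<le> (\<lambda>s. Kb (Suc N) * s ^ Suc N / fact (Suc N)) t - (\<lambda>s. Kb (Suc N) * s ^ Suc N / fact (Suc N)) 0"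
  proof (rule deriv_cmp[OF Suc.prems mm_cont])
    show "continuous_on {0..t} (\<lambda>s. Kb (Suc N) * s ^ Suc N / fact (Suc N))"
      by (intro continuous_intros) auto
    fix s :: real assume s: "0 < s" "s < t"
    show "(mm (Suc N) has_real_derivative (B N s (\<lambda>_. 1) - B (Suc N) s (\<lambda>_. 1))) (at s)"
      using mm_deriv s by blast
    show "((\<lambda>s. Kb (Suc N) * s ^ Suc N / fact (Suc N)) has_real_derivative Kb (Suc N) * s ^ N / fact N) (at s)"
    proof -
      have "((\<lambda>s. Kb (Suc N) * s ^ Suc N / fact (Suc N)) has_real_derivative
          Kb (Suc N) * (real (Suc N) * s ^ (Suc N - Suc 0)) / fact (Suc N)) (at s)"
        by (intro DERIV_cdivide DERIV_cmult DERIV_pow)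
      moreover have "Kb (Suc N) * (real (Suc N) * s ^ (Suc N - Suc 0)) / fact (Suc N) = Kb (Suc N) * s ^ N / fact N"
        by (simp add: fact_Suc del: of_nat_Suc)
      ultimately show ?thesis by simp
    qed
    have "B N s (\<lambda>_. 1) - B (Suc N) s (\<lambda>_. 1) \<le> B N s (\<lambda>_. 1)"
      using B_nonneg[of "\<lambda>_. 1" "Suc N" s] by simp
    also have "\<dots> \<le> Qb N * mm N s" using B_one_le s by simp
    also have "\<dots> \<le> Qb N * (Kb N * s ^ N / fact N)"
      using Suc.IH[of s] s by (intro mult_left_mono) (auto simp: Qb_def)
    also have "\<dots> \<le> Kb (Suc N) * s ^ N / fact N"
      using Qb_le[of N] s by (simp add: divide_right_mono mult_right_mono mult.assoc[symmetric])
    finally show "B N s (\<lambda>_. 1) - B (Suc N) s (\<lambda>_. 1) \<le> Kb (Suc N) * s ^ N / fact N" .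
  qed
  then show ?case using m0 by simp
qed

definition beta :: "nat \<Rightarrow> real \<Rightarrow> real" where
  "beta N t = Qb N * Kb N * t ^ Suc N / fact N"

lemma beta_mono: "0 \<le> s \<Longrightarrow> s \<le> t \<Longrightarrow> beta N s \<le> beta N t"
  unfolding beta_def
  by (intro divide_right_mono mult_left_mono power_mono) (auto simp: Qb_def Kb_def)

lemma E_one_ge: "0 \<le> t \<Longrightarrow> 1 - beta N t \<le> E (Suc N) t (\<lambda>_. 1)"
proof -
  assume t: "0 \<le> t"
  define c where "c = Qb N * Kb N * t ^ N / fact N"
  have "(\<lambda>s. - E (Suc N) s (\<lambda>_. 1)) t - (\<lambda>s. - E (Suc N) s (\<lambda>_. 1)) 0 \<le> (\<lambda>s. c * s) t - (\<lambda>s. c * s) 0"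
  proof (rule deriv_cmp[OF t])
    show "continuous_on {0..t} (\<lambda>s. - E (Suc N) s (\<lambda>_. 1))" by (intro continuous_intros E_cont)
    show "continuous_on {0..t} (\<lambda>s. c * s)" by (intro continuous_intros)
    fix s :: real assume s: "0 < s" "s < t"
    show "((\<lambda>s. - E (Suc N) s (\<lambda>_. 1)) has_real_derivative - (E N s (L (\<lambda>_. 1)) - B N s (\<lambda>_. 1))) (at s)"
      by (intro DERIV_minus E_deriv s)
    show "((\<lambda>s. c * s) has_real_derivative c) (at s)" by (auto intro!: derivative_eq_intros)
    have "- (E N s (L (\<lambda>_. 1)) - B N s (\<lambda>_. 1)) = B N s (\<lambda>_. 1)" by (simp add: L_one E_def)
    also have "\<dots> \<le> Qb N * mm N s" using B_one_le s by simp
    also have "\<dots> \<le> Qb N * (Kb N * s ^ N / fact N)"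
      using mm_bound[of s N] s by (intro mult_left_mono) (auto simp: Qb_def)
    also have "\<dots> \<le> c" unfolding c_def using s
      by (auto simp: Qb_def Kb_def mult.assoc intro!: mult_left_mono divide_right_mono power_mono)
    finally show "- (E N s (L (\<lambda>_. 1)) - B N s (\<lambda>_. 1)) \<le> c" .
  qed
  then show ?thesis using E_at0[of N "\<lambda>_. 1"] by (simp add: c_def beta_def algebra_simps)
qed

lemma AR_swp: "\<zeta> \<in> U0 \<Longrightarrow> x \<in> mv \<zeta> \<Longrightarrow> ARe (swp \<zeta> x) = ARe \<zeta> + dlt \<zeta> x"
  using U0_swp[of \<zeta> x] by (simp add: ARe_def)

lemma dlt_sq: "x \<in> mv \<zeta> \<Longrightarrow> (real_of_int (dlt \<zeta> x))\<^sup>2 = 1"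
  by (auto simp: dlt_def mv_def)

lemma sum_dlt_real: "\<zeta> \<in> U0 \<Longrightarrow> (\<Sum>x\<in>mv \<zeta>. real_of_int (dlt \<zeta> x)) = 1"
  using sum_dlt[of \<zeta>] by (metis of_int_1 of_int_sum)

lemma L_AR: "\<zeta> \<in> U0 \<Longrightarrow> L ARe \<zeta> = 1/2"
proof -
  assume u: "\<zeta> \<in> U0"
  have "(\<Sum>x\<in>mv \<zeta>. ARe (swp \<zeta> x) - ARe \<zeta>) = (\<Sum>x\<in>mv \<zeta>. real_of_int (dlt \<zeta> x))"
    by (intro sum.cong refl) (simp add: AR_swp[OF u])
  then show ?thesis using sum_dlt_real[OF u] by (simp add: L_def)
qed

lemma L_sq: "\<zeta> \<in> U0 \<Longrightarrow> L (\<lambda>\<eta>. (ARe \<eta> - c)\<^sup>2) \<zeta> = ARe \<zeta> - c + q \<zeta>"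
proof -
  assume u: "\<zeta> \<in> U0"
  have fm: "finite (mv \<zeta>)" using mv_finite_card[OF u] by simp
  have "(\<Sum>x\<in>mv \<zeta>. (ARe (swp \<zeta> x) - c)\<^sup>2 - (ARe \<zeta> - c)\<^sup>2) =
        (\<Sum>x\<in>mv \<zeta>. 2 * (ARe \<zeta> - c) * real_of_int (dlt \<zeta> x) + 1)"
  proof (intro sum.cong refl)
    fix x assume x: "x \<in> mv \<zeta>"
    show "(ARe (swp \<zeta> x) - c)\<^sup>2 - (ARe \<zeta> - c)\<^sup>2 = 2 * (ARe \<zeta> - c) * real_of_int (dlt \<zeta> x) + 1"
      using AR_swp[OF u x] dlt_sq[OF x] by (simp add: power2_eq_square algebra_simps)
  qed
  also have "\<dots> = 2 * (ARe \<zeta> - c) + real (card (mv \<zeta>))"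
    by (simp add: sum.distrib sum_distrib_left[symmetric] sum_dlt_real[OF u])
  finally show ?thesis by (simp add: L_def qtot_half[OF u])
qed

lemma AR_nonneg: "\<eta> \<in> U0 \<Longrightarrow> 0 \<le> ARe \<eta>"
  using Aa_nonneg by (simp add: ARe_def)

lemma E_AR_le: "0 \<le> t \<Longrightarrow> E N t ARe \<le> t / 2"
proof (cases N)
  case 0 assume "0 \<le> t" then show ?thesis using 0 by (simp add: E0)
next
  case (Suc M)
  assume t: "0 \<le> t"
  have "E (Suc M) t ARe - E (Suc M) 0 ARe \<le> (\<lambda>s. s / 2) t - (\<lambda>s. s / 2) 0"
  proof (rule deriv_cmp[OF t E_cont])
    show "continuous_on {0..t} (\<lambda>s. s / 2)" by (intro continuous_intros) auto
    fix s :: real assume s: "0 < s" "s < t"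
    show "((\<lambda>t. E (Suc M) t ARe) has_real_derivative (E M s (L ARe) - B M s ARe)) (at s)"
      using E_deriv s by blast
    show "((\<lambda>s. s / 2) has_real_derivative 1 / 2) (at s)" by (auto intro!: derivative_eq_intros)
    have "E M s (L ARe) - B M s ARe \<le> E M s (L ARe)" using B_nonneg[of ARe] AR_nonneg by auto
    also have "\<dots> = E M s (\<lambda>_. 1/2)" unfolding E_def using R_U0 L_AR
      by (intro sum.cong refl) auto
    also have "\<dots> = 1/2 * E M s (\<lambda>_. 1)" by (rule E_const)
    also have "\<dots> \<le> 1/2" using E_one_le[of s M] s by simp
    finally show "E M s (L ARe) - B M s ARe \<le> 1 / 2" .
  qed
  then show ?thesis using Suc E_at0[of M ARe] by (simp add: ARe_def Aa_Ostep)
qed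

lemma q_le_AR: "\<eta> \<in> U0 \<Longrightarrow> 0 < a \<Longrightarrow> q \<eta> \<le> ARe \<eta> / a + a + 1"
proof -
  assume u: "\<eta> \<in> U0" and a: "0 < a"
  have q: "q \<eta> \<le> 2 * sqrt (ARe \<eta>) + 1"
    using card_mv_bound[OF u] qtot_half[OF u] by (simp add: ARe_def)
  have A: "0 \<le> ARe \<eta>" using AR_nonneg[OF u] .
  have "0 \<le> (sqrt (ARe \<eta>) - a)\<^sup>2" by simp
  then have "2 * a * sqrt (ARe \<eta>) \<le> ARe \<eta> + a\<^sup>2" using A by (simp add: power2_eq_square algebra_simps)
  then have "2 * sqrt (ARe \<eta>) \<le> ARe \<eta> / a + a" using a by (simp add: field_simps power2_eq_square)
  then show ?thesis using q by simp
qed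

lemma E_sq_le:
  assumes t: "0 \<le> t" and c: "0 \<le> c" and a: "0 < a"
  shows "E (Suc (Suc N)) t (\<lambda>\<eta>. (ARe \<eta> - c)\<^sup>2) \<le>
    c\<^sup>2 + t\<^sup>2 / 4 + (- c + c * beta N t + t / (2 * a) + a + 1) * t"
proof -
  define K where "K = - c + c * beta N t + t / (2 * a) + a + 1"
  let ?f = "\<lambda>\<eta>. (ARe \<eta> - c)\<^sup>2"
  have "E (Suc (Suc N)) t ?f - E (Suc (Suc N)) 0 ?f \<le> (\<lambda>s. s\<^sup>2 / 4 + K * s) t - (\<lambda>s. s\<^sup>2 / 4 + K * s) 0"
  proof (rule deriv_cmp[OF t E_cont])
    show "continuous_on {0..t} (\<lambda>s. s\<^sup>2 / 4 + K * s)" by (intro continuous_intros) auto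
    fix s :: real assume s: "0 < s" "s < t"
    show "((\<lambda>t. E (Suc (Suc N)) t ?f) has_real_derivative (E (Suc N) s (L ?f) - B (Suc N) s ?f)) (at s)"
      using E_deriv s by blast
    show "((\<lambda>s. s\<^sup>2 / 4 + K * s) has_real_derivative s / 2 + K) (at s)"
      by (auto intro!: derivative_eq_intros)
    have "E (Suc N) s (L ?f) - B (Suc N) s ?f \<le> E (Suc N) s (L ?f)"
      using B_nonneg[of ?f] by auto
    also have "\<dots> \<le> E (Suc N) s (\<lambda>\<eta>. ARe \<eta> - c + (ARe \<eta> / a + a + 1))"
      by (rule E_mono) (simp add: L_sq q_le_AR a)
    also have "\<dots> = (1 + 1 / a) * E (Suc N) s ARe - (c - (a + 1)) * E (Suc N) s (\<lambda>_. 1)"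
      by (simp add: E_def algebra_simps sum.distrib sum_subtractf sum_distrib_left add_divide_distrib)
    also have "\<dots> \<le> (1 + 1 / a) * (s / 2) - c * (1 - beta N t) + (a + 1)"
    proof -
      have "E (Suc N) s ARe \<le> s / 2" using E_AR_le s by simp
      then have 1: "(1 + 1 / a) * E (Suc N) s ARe \<le> (1 + 1 / a) * (s / 2)"
        using a by (intro mult_left_mono) auto
      have e1: "1 - beta N t \<le> E (Suc N) s (\<lambda>_. 1)"
        using E_one_ge[of s N] beta_mono[of s t N] s by simp
      have e2: "E (Suc N) s (\<lambda>_. 1) \<le> 1" using E_one_le[of s] s by simp
      have e3: "0 \<le> E (Suc N) s (\<lambda>_. 1)" by (rule E_nonneg) simp
      have "- (c - (a + 1)) * E (Suc N) s (\<lambda>_. 1) \<le> - c * (1 - beta N t) + (a + 1)"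
      proof -
        have "c * (1 - beta N t) \<le> c * E (Suc N) s (\<lambda>_. 1)" using e1 c by (intro mult_left_mono)
        moreover have "(a + 1) * E (Suc N) s (\<lambda>_. 1) \<le> (a + 1)" using e2 a by simp
        ultimately show ?thesis by (simp add: algebra_simps)
      qed
      with 1 show ?thesis by linarith
    qed
    also have "\<dots> \<le> s / 2 + K"
      unfolding K_def using s a by (simp add: field_simps)
    finally show "E (Suc N) s (L ?f) - B (Suc N) s ?f \<le> s / 2 + K" .
  qed
  then show ?thesis using E_at0[of "Suc N" ?f] by (simp add: ARe_def Aa_Ostep K_def)
qed

lemma cheb:
  assumes d: "0 < d"
  shows "E N t (\<lambda>\<eta>. if c + d < ARe \<eta> then 1 else 0) \<le> E N t (\<lambda>\<eta>. (ARe \<eta> - c)\<^sup>2) / d\<^sup>2"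
proof -
  have "E N t (\<lambda>\<eta>. if c + d < ARe \<eta> then 1 else 0) \<le> E N t (\<lambda>\<eta>. (1 / d\<^sup>2) * (ARe \<eta> - c)\<^sup>2)"
  proof (rule E_mono)
    fix \<eta> :: config
    show "(if c + d < ARe \<eta> then 1 else 0) \<le> 1 / d\<^sup>2 * (ARe \<eta> - c)\<^sup>2"
    proof (cases "c + d < ARe \<eta>")
      case True
      then have "d\<^sup>2 \<le> (ARe \<eta> - c)\<^sup>2" using d by (intro power_mono) auto
      then show ?thesis using True d by (simp add: field_simps)
    qed simp
  qed
  also have "\<dots> = 1 / d\<^sup>2 * E N t (\<lambda>\<eta>. (ARe \<eta> - c)\<^sup>2)" by (rule E_cmult)
  finally show ?thesis by simp
qed

lemma sum_S_le_R: "finite S \<Longrightarrow> (\<Sum>\<eta>\<in>S. P n \<eta> t) \<le> (\<Sum>\<eta>\<in>R n. P n \<eta> t)"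
proof -
  assume S: "finite S"
  have "(\<Sum>\<eta>\<in>S. P n \<eta> t) = (\<Sum>\<eta>\<in>S \<inter> R n. P n \<eta> t)"
    using S by (intro sum.mono_neutral_right) (auto simp: pn_zero)
  also have "\<dots> \<le> (\<Sum>\<eta>\<in>R n. P n \<eta> t)"
    using R_finite by (intro sum_mono2) (auto simp: pn_nonneg)
  finally show ?thesis .
qed

lemma partial_le: "0 \<le> t \<Longrightarrow> finite S \<Longrightarrow> (\<Sum>n<N. \<Sum>\<eta>\<in>S. P n \<eta> t) \<le> 1"
proof -
  assume t: "0 \<le> t" and S: "finite S"
  have "(\<Sum>n<N. \<Sum>\<eta>\<in>S. P n \<eta> t) \<le> (\<Sum>n<N. \<Sum>\<eta>\<in>R n. P n \<eta> t)"
    by (intro sum_mono sum_S_le_R S)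
  also have "\<dots> = E N t (\<lambda>_. 1)" by (simp add: E_def)
  also have "\<dots> \<le> 1" using E_one_le t by simp
  finally show ?thesis .
qed

lemma summable_pn: "0 \<le> t \<Longrightarrow> summable (\<lambda>n. P n \<eta> t)"
  using partial_le[of t "{\<eta>}"] by (intro summableI_nonneg_bounded[of _ 1]) (auto simp: pn_nonneg)

lemma summable_S: "0 \<le> t \<Longrightarrow> finite S \<Longrightarrow> summable (\<lambda>n. \<Sum>\<eta>\<in>S. P n \<eta> t)"
  using partial_le[of t S] by (intro summableI_nonneg_bounded[of _ 1]) (auto simp: pn_nonneg sum_nonneg)

lemma prob_in_eq: "0 \<le> t \<Longrightarrow> finite S \<Longrightarrow> prob_in (1/2) t S = (\<Sum>n. \<Sum>\<eta>\<in>S. P n \<eta> t)"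
  unfolding prob_in_def trans_prob_def
  by (simp add: suminf_sum summable_pn)

lemma prob_in_le1: "0 \<le> t \<Longrightarrow> finite S \<Longrightarrow> prob_in (1/2) t S \<le> 1"
  by (simp add: prob_in_eq suminf_le_const summable_S partial_le)

lemma prob_in_ge:
  assumes t: "0 \<le> t" and S: "finite S" and sub: "{\<eta>\<in>U0. ARe \<eta> \<le> c + d} \<subseteq> S"
    and d: "0 < d" and c: "0 \<le> c" and a: "0 < a"
  shows "1 - beta (Suc N) t - (c\<^sup>2 + t\<^sup>2 / 4 + (- c + c * beta N t + t / (2 * a) + a + 1) * t) / d\<^sup>2
     \<le> prob_in (1/2) t S"
proof -
  let ?M = "Suc (Suc N)"
  let ?I = "\<lambda>\<eta>. if c + d < ARe \<eta> then 1 else (0::real)"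
  have "E ?M t (\<lambda>_. 1) - E ?M t ?I = E ?M t (\<lambda>\<eta>. 1 - ?I \<eta>)" by (simp add: E_diff)
  also have "\<dots> \<le> (\<Sum>n<?M. \<Sum>\<eta>\<in>S. P n \<eta> t)"
    unfolding E_def
  proof (intro sum_mono)
    fix n
    have "(\<Sum>\<eta>\<in>R n. P n \<eta> t * (1 - ?I \<eta>)) = (\<Sum>\<eta>\<in>R n \<inter> {\<eta>. ARe \<eta> \<le> c + d}. P n \<eta> t)"
      using R_finite by (intro sum.mono_neutral_cong_right) auto
    also have "\<dots> \<le> (\<Sum>\<eta>\<in>S. P n \<eta> t)"
      using sub R_U0 S by (intro sum_mono2) (auto simp: pn_nonneg)
    finally show "(\<Sum>\<eta>\<in>R n. P n \<eta> t * (1 - ?I \<eta>)) \<le> (\<Sum>\<eta>\<in>S. P n \<eta> t)" .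
  qed
  also have "\<dots> \<le> (\<Sum>n. \<Sum>\<eta>\<in>S. P n \<eta> t)"
    by (intro sum_le_suminf summable_S t S) (auto simp: sum_nonneg pn_nonneg)
  also have "\<dots> = prob_in (1/2) t S" using prob_in_eq t S by simp
  finally have 1: "E ?M t (\<lambda>_. 1) - E ?M t ?I \<le> prob_in (1/2) t S" .
  have 2: "1 - beta (Suc N) t \<le> E ?M t (\<lambda>_. 1)" using E_one_ge t by blast
  have 3: "E ?M t ?I \<le> (c\<^sup>2 + t\<^sup>2 / 4 + (- c + c * beta N t + t / (2 * a) + a + 1) * t) / d\<^sup>2"
    using cheb[OF d, of ?M t c] E_sq_le[OF t c a, of N] d
    by (smt (verit, best) divide_right_mono zero_le_power2)
  show ?thesis using 1 2 3 by linarith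
qed

lemma pow_fact_zero: "(\<lambda>n. x ^ n / fact n :: real) \<longlonglongrightarrow> 0"
  using summable_LIMSEQ_zero[OF summable_exp[of x]] by (simp add: field_simps)

lemma beta_zero: "0 \<le> t \<Longrightarrow> (\<lambda>N. beta N t) \<longlonglongrightarrow> 0"
proof -
  assume t: "0 \<le> t"
  define y where "y = 18 * t\<^sup>2"
  have lim: "(\<lambda>N. 3 * t * sqrt (y ^ N / fact N)) \<longlonglongrightarrow> 0"
    using tendsto_mult_left[OF tendsto_real_sqrt[OF pow_fact_zero[of y]], of "3 * t"] by simp
  show ?thesis
  proof (rule Lim_null_comparison[OF _ lim], rule always_eventually, rule allI)
    fix N
    have Q: "Qb N \<le> 3 * sqrt (real N + 1)"
    proof -
      have "sqrt (real N) \<le> sqrt (real N + 1)" by simp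
      moreover have "1 \<le> sqrt (real N + 1)" by simp
      ultimately show ?thesis unfolding Qb_def by linarith
    qed
    have N2: "real N + 1 \<le> 2 ^ N"
    proof -
      have "N + 1 \<le> 2 ^ N" by (induction N) auto
      then have "real (N + 1) \<le> real (2 ^ N)" by (simp only: of_nat_le_iff)
      then show ?thesis by simp
    qed
    have fpos: "0 < (fact N :: real)" by simp
    have "norm (beta N t) = Qb N * Kb N * t ^ Suc N / fact N"
      unfolding beta_def using t by (simp add: Qb_def Kb_def)
    also have "\<dots> \<le> 3 * sqrt (real N + 1) * Kb N * t ^ Suc N / fact N"
      using Q t by (intro divide_right_mono mult_right_mono) (auto simp: Kb_def)
    also have "\<dots> = 3 * t * sqrt ((real N + 1) * (9 * t\<^sup>2) ^ N / fact N)"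
    proof -
      have q9: "(9 * t\<^sup>2) ^ N = ((3 * t) ^ N)\<^sup>2"
      proof -
        have "(9::real) ^ N = (3 * 3) ^ N" by simp
        then have "(9::real) ^ N = 3 ^ N * 3 ^ N" by (simp only: power_mult_distrib)
        then show ?thesis by (simp add: power2_eq_square power_mult_distrib)
      qed
      have sf: "sqrt (fact N) > 0" using fpos by simp
      have s1: "sqrt ((real N + 1) * (9 * t\<^sup>2) ^ N / fact N) = sqrt (real N + 1) * (3 * t) ^ N / sqrt (fact N)"
        unfolding q9 using t by (simp add: real_sqrt_mult real_sqrt_divide)
      have s2: "Kb N / fact N = 3 ^ N / sqrt (fact N)"
      proof -
        have "fact N = sqrt (fact N) * (sqrt (fact N) :: real)" using fpos by simp
        then show ?thesis unfolding Kb_def using sf by (simp add: field_simps)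
      qed
      have "3 * sqrt (real N + 1) * Kb N * t ^ Suc N / fact N = 3 * sqrt (real N + 1) * t ^ Suc N * (Kb N / fact N)"
        by simp
      also have "\<dots> = 3 * t * (sqrt (real N + 1) * (3 * t) ^ N / sqrt (fact N))"
        unfolding s2 by (simp add: power_mult_distrib)
      finally show ?thesis unfolding s1 .
    qed
    also have "\<dots> \<le> 3 * t * sqrt (y ^ N / fact N)"
    proof -
      have "(real N + 1) * (9 * t\<^sup>2) ^ N \<le> 2 ^ N * (9 * t\<^sup>2) ^ N"
        using N2 by (intro mult_right_mono) auto
      also have "\<dots> = y ^ N"
      proof -
        have "y = 2 * (9 * t\<^sup>2)" by (simp add: y_def)
        then show ?thesis by (simp only: power_mult_distrib)
      qed
      finally show ?thesis using t by (intro mult_left_mono real_sqrt_le_mono divide_right_mono) auto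
    qed
    finally show "norm (beta N t) \<le> 3 * t * sqrt (y ^ N / fact N)" .
  qed
qed

lemma neg_ln_sums:
  fixes u :: real
  assumes "0 \<le> u" "u < 1"
  shows "(\<lambda>n. u ^ Suc n / real (Suc n)) sums (- ln (1 - u))"
proof -
  have sm: "summable (\<lambda>n. u ^ Suc n / real (Suc n))"
  proof (rule summable_comparison_test[OF _ summable_geometric[of u]])
    show "\<exists>N. \<forall>n\<ge>N. norm (u ^ Suc n / real (Suc n)) \<le> u ^ n"
    proof (intro exI allI impI)
      fix n :: nat
      have "u ^ Suc n / real (Suc n) \<le> u ^ Suc n / 1" using assms
        by (intro divide_left_mono) auto
      also have "\<dots> \<le> u ^ n" using assms by (simp add: power_le_imp_le_exp mult_left_le_one_le)
      finally show "norm (u ^ Suc n / real (Suc n)) \<le> u ^ n" using assms by simp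
    qed
  qed (use assms in simp)
  have "ln (1 - u) = (\<Sum>n. (-1)^n * (1 / real (n + 1)) * ((1 - u) - 1)^(Suc n))"
    by (rule ln_series) (use assms in auto)
  also have "\<dots> = (\<Sum>n. - (u ^ Suc n / real (Suc n)))"
  proof (rule arg_cong[where f=suminf], rule ext)
    fix n
    have h: "(-1::real) ^ k * (- u) ^ Suc k = - (u ^ Suc k)" for k
    proof (induction k)
      case (Suc k)
      have "(-1::real) ^ Suc k * (- u) ^ Suc (Suc k) = ((-1) ^ k * (- u) ^ Suc k) * u" by simp
      then show ?case using Suc by simp
    qed simp
    have "(-1)^n * (1 / real (n + 1)) * ((1 - u) - 1)^(Suc n) = ((-1)^n * (- u)^(Suc n)) / real (Suc n)"
      by simp
    then show "(-1)^n * (1 / real (n + 1)) * ((1 - u) - 1)^(Suc n) = - (u ^ Suc n / real (Suc n))"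
      by (simp only: h)
  qed
  also have "\<dots> = - (\<Sum>n. u ^ Suc n / real (Suc n))" using sm by (rule suminf_minus)
  finally show ?thesis using sm by (simp add: sums_iff)
qed

lemma ln_1p_sums:
  fixes y :: real
  assumes "0 \<le> y" "y < 1"
  shows "(\<lambda>n. (y ^ Suc n - (y\<^sup>2) ^ Suc n) / real (Suc n)) sums (ln (1 + y))"
proof -
  have y2: "0 \<le> y\<^sup>2" "y\<^sup>2 < 1" using assms by (auto simp: power_less_one_iff abs_square_less_1)
  have "(\<lambda>n. y ^ Suc n / real (Suc n) - (y\<^sup>2) ^ Suc n / real (Suc n)) sums (- ln (1 - y) - - ln (1 - y\<^sup>2))"
    by (intro sums_diff neg_ln_sums assms y2)
  moreover have "- ln (1 - y) - - ln (1 - y\<^sup>2) = ln (1 + y)"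
  proof -
    have "1 - y\<^sup>2 = (1 - y) * (1 + y)" by (simp add: power2_eq_square algebra_simps)
    then have "ln (1 - y\<^sup>2) = ln (1 - y) + ln (1 + y)" using assms by (simp add: ln_mult)
    then show ?thesis by simp
  qed
  ultimately show ?thesis by (simp add: diff_divide_distrib)
qed

lemma geo_diff_bound:
  fixes z :: real
  assumes "0 \<le> z" "z < 1"
  shows "(\<Sum>k=1..m. z ^ k - (z\<^sup>2) ^ k) \<le> z / (1 - z\<^sup>2)"
proof -
  have id: "(1 - z\<^sup>2) * (\<Sum>k=1..m. z ^ k - (z\<^sup>2) ^ k) = z - z ^ Suc m * (1 + z - z ^ Suc m)" for m
  proof (induction m)
    case 0 then show ?case by simp
  next
    case (Suc m)
    have "(\<Sum>k=1..Suc m. z ^ k - (z\<^sup>2) ^ k) = (\<Sum>k=1..m. z ^ k - (z\<^sup>2) ^ k) + (z ^ Suc m - (z\<^sup>2) ^ Suc m)"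
      by simp
    then have "(1 - z\<^sup>2) * (\<Sum>k=1..Suc m. z ^ k - (z\<^sup>2) ^ k) =
       z - z ^ Suc m * (1 + z - z ^ Suc m) + (1 - z\<^sup>2) * (z ^ Suc m - (z\<^sup>2) ^ Suc m)"
      using Suc by (simp add: distrib_left)
    also have "\<dots> = z - z ^ Suc (Suc m) * (1 + z - z ^ Suc (Suc m))"
      by (simp add: power2_eq_square power_mult_distrib algebra_simps power_mult[symmetric])
    finally show ?case .
  qed
  have z2: "z\<^sup>2 < 1" using assms by (simp add: abs_square_less_1)
  have "z ^ Suc m \<le> 1" using assms by (intro power_le_one) auto
  then have "0 \<le> z ^ Suc m * (1 + z - z ^ Suc m)"
    using assms by (intro mult_nonneg_nonneg) auto
  then have "(1 - z\<^sup>2) * (\<Sum>k=1..m. z ^ k - (z\<^sup>2) ^ k) \<le> z" using id[of m] by simp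
  then show ?thesis using z2 by (simp add: field_simps)
qed

lemma sinh_lb: "0 \<le> (u::real) \<Longrightarrow> 2 * u \<le> exp u - exp (- u)"
proof -
  assume u: "0 \<le> u"
  have "(\<lambda>x. exp x - exp (- x) - 2 * x) 0 \<le> (\<lambda>x. exp x - exp (- x) - 2 * x) u"
  proof (rule DERIV_nonneg_imp_increasing_open[of 0 u])
    fix x :: real
    have d: "((\<lambda>x. exp x - exp (- x) - 2 * x) has_real_derivative exp x + exp (- x) - 2) (at x)"
      by (auto intro!: derivative_eq_intros)
    have "0 \<le> (exp (x/2) - exp (- x/2))\<^sup>2" by simp
    then have "0 \<le> exp x + exp (- x) - 2"
      by (simp add: power2_eq_square algebra_simps mult_exp_exp)
    then show "\<exists>y. ((\<lambda>x. exp x - exp (- x) - 2 * x) has_real_derivative y) (at x) \<and> 0 \<le> y"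
      using d by blast
  qed (use u in \<open>auto intro!: continuous_intros\<close>)
  then show ?thesis by simp
qed

lemma key_sum:
  fixes s :: real
  assumes s: "0 < s"
  shows "(\<Sum>k=1..m. ln (1 + exp (- s * real k))) \<le> pi\<^sup>2 / (12 * s)"
proof -
  define f where "f = (\<lambda>k n. ((exp (- s * real k)) ^ Suc n - ((exp (- s * real k))\<^sup>2) ^ Suc n) / real (Suc n))"
  have sk: "f k sums ln (1 + exp (- s * real k))" if "k \<in> {1..m}" for k
  proof -
    have "exp (- s * real k) < 1" using that s by simp
    then show ?thesis unfolding f_def by (intro ln_1p_sums) auto
  qed
  have S: "(\<lambda>n. \<Sum>k=1..m. f k n) sums (\<Sum>k=1..m. ln (1 + exp (- s * real k)))"
    by (rule sums_sum) (rule sk)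
  have T: "(\<lambda>n. 1 / (2 * s) * (1 / real (Suc n))\<^sup>2) sums (1 / (2 * s) * (pi\<^sup>2 / 6))"
    using sums_mult[OF inverse_squares_sums, of "1 / (2 * s)"] by (simp add: power_divide)
  have le: "(\<Sum>k=1..m. f k n) \<le> 1 / (2 * s) * (1 / real (Suc n))\<^sup>2" for n
  proof -
    define j where "j = real (Suc n)"
    have j: "0 < j" by (simp add: j_def)
    define z where "z = exp (- s * j)"
    have z: "0 \<le> z" "z < 1" using s j by (auto simp: z_def)
    have pw: "(exp (- s * real k)) ^ Suc n = z ^ k" for k
    proof -
      have "(exp (- s * real k)) ^ Suc n = exp (real (Suc n) * (- s * real k))"
        by (rule exp_of_nat_mult[symmetric])
      also have "\<dots> = exp (real k * (- s * j))" by (simp add: j_def algebra_simps)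
      also have "\<dots> = z ^ k" unfolding z_def by (rule exp_of_nat_mult)
      finally show ?thesis .
    qed
    have pw2: "((exp (- s * real k))\<^sup>2) ^ Suc n = (z\<^sup>2) ^ k" for k
      by (metis pw power_mult mult.commute)
    have "(\<Sum>k=1..m. f k n) = (\<Sum>k=1..m. z ^ k - (z\<^sup>2) ^ k) / j"
      unfolding f_def sum_divide_distrib[symmetric] j_def[symmetric] pw pw2 ..
    also have "\<dots> \<le> z / (1 - z\<^sup>2) / j"
      by (intro divide_right_mono geo_diff_bound z) (use j in auto)
    also have "z / (1 - z\<^sup>2) = 1 / (exp (s * j) - exp (- s * j))"
    proof -
      define X where "X = exp (s * j)"
      have X: "1 < X" using s j by (simp add: X_def)
      have zX: "z = 1 / X" by (simp add: z_def X_def exp_minus field_simps)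
      have e: "exp (- s * j) = 1 / X" by (simp add: X_def exp_minus field_simps)
      show ?thesis unfolding zX e X_def[symmetric] using X
        by (simp add: field_simps power2_eq_square)
    qed
    also have "1 / (exp (s * j) - exp (- s * j)) / j \<le> 1 / (2 * (s * j)) / j"
      using sinh_lb[of "s * j"] s j by (intro divide_right_mono divide_left_mono) auto
    also have "\<dots> = 1 / (2 * s) * (1 / j)\<^sup>2" by (simp add: power2_eq_square)
    finally show ?thesis by (simp add: j_def)
  qed
  have "(\<Sum>k=1..m. ln (1 + exp (- s * real k))) \<le> 1 / (2 * s) * (pi\<^sup>2 / 6)"
    by (rule sums_le[OF le S T])
  then show ?thesis by simp
qed

definition Kset :: "real \<Rightarrow> config set" where
  "Kset M = {\<eta>\<in>U0. real_of_int (Aa \<eta>) \<le> M}"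

definition psi :: "config \<Rightarrow> nat set \<times> nat set" where
  "psi \<eta> = (nat ` Pp \<eta>, (\<lambda>z. nat (- z)) ` Hm \<eta>)"

lemma inj_psi: "inj_on psi U0"
proof (rule inj_onI)
  fix \<eta> \<eta>' assume "\<eta> \<in> U0" "\<eta>' \<in> U0" and e: "psi \<eta> = psi \<eta>'"
  have p: "Pp \<xi> = int ` fst (psi \<xi>)" for \<xi>
  proof -
    have "int ` fst (psi \<xi>) = (\<lambda>y. int (nat y)) ` Pp \<xi>" by (simp add: psi_def image_image)
    also have "\<dots> = (\<lambda>y. y) ` Pp \<xi>" by (rule image_cong) (auto simp: Pp_def)
    finally show ?thesis by simp
  qed
  have h: "Hm \<xi> = (\<lambda>k. - int k) ` snd (psi \<xi>)" for \<xi>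
  proof -
    have "(\<lambda>k. - int k) ` snd (psi \<xi>) = (\<lambda>z. - int (nat (- z))) ` Hm \<xi>" by (simp add: psi_def image_image)
    also have "\<dots> = (\<lambda>y. y) ` Hm \<xi>" by (rule image_cong) (auto simp: Hm_def)
    finally show ?thesis by simp
  qed
  have e1: "fst (psi \<eta>) = fst (psi \<eta>')" "snd (psi \<eta>) = snd (psi \<eta>')" using e by simp_all
  have a1: "Pp \<eta> = Pp \<eta>'" using p e1 by metis
  have a2: "Hm \<eta> = Hm \<eta>'" using h e1 by metis
  show "\<eta> = \<eta>'"
  proof (rule ext)
    fix x
    show "\<eta> x = \<eta>' x"
    proof (cases "0 \<le> x")
      case True
      have "x \<in> Pp \<eta> \<longleftrightarrow> x \<in> Pp \<eta>'" using a1 by simp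
      then show ?thesis using True by (simp add: Pp_def)
    next
      case False
      have "x \<in> Hm \<eta> \<longleftrightarrow> x \<in> Hm \<eta>'" using a2 by simp
      then show ?thesis using False by (simp add: Hm_def)
    qed
  qed
qed

lemma psi_weight:
  assumes "\<eta> \<in> U0"
  shows "real_of_int (Aa \<eta>) = real (\<Sum>(fst (psi \<eta>))) + real (\<Sum>(snd (psi \<eta>)))"
proof -
  have i1: "inj_on nat (Pp \<eta>)" by (auto simp: inj_on_def Pp_def)
  have i2: "inj_on (\<lambda>z. nat (- z)) (Hm \<eta>)" by (auto simp: inj_on_def Hm_def)
  have "real (\<Sum>(nat ` Pp \<eta>)) = (\<Sum>y\<in>Pp \<eta>. real (nat y))"
    by (simp add: sum.reindex[OF i1])
  also have "\<dots> = (\<Sum>y\<in>Pp \<eta>. real_of_int y)" by (intro sum.cong) (auto simp: Pp_def)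
  finally have 1: "real (\<Sum>(nat ` Pp \<eta>)) = (\<Sum>y\<in>Pp \<eta>. real_of_int y)" .
  have "real (\<Sum>((\<lambda>z. nat (- z)) ` Hm \<eta>)) = (\<Sum>z\<in>Hm \<eta>. real (nat (- z)))"
    by (simp add: sum.reindex[OF i2])
  also have "\<dots> = (\<Sum>z\<in>Hm \<eta>. real_of_int (- z))" by (intro sum.cong) (auto simp: Hm_def)
  finally have 2: "real (\<Sum>((\<lambda>z. nat (- z)) ` Hm \<eta>)) = (\<Sum>z\<in>Hm \<eta>. real_of_int (- z))" .
  show ?thesis unfolding psi_def Aa_def using 1 2 by simp
qed

definition Wset :: "real \<Rightarrow> nat \<Rightarrow> (nat set \<times> nat set) set" where
  "Wset M m = {(S, T). S \<subseteq> {0..m} \<and> T \<subseteq> {1..m} \<and> real (\<Sum>S) + real (\<Sum>T) \<le> M}"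

lemma psi_into:
  assumes "\<eta> \<in> Kset M"
  shows "psi \<eta> \<in> Wset M (nat \<lfloor>M\<rfloor>)"
proof -
  have u: "\<eta> \<in> U0" and A: "real_of_int (Aa \<eta>) \<le> M" using assms by (auto simp: Kset_def)
  have f: "finite (Pp \<eta>)" "finite (Hm \<eta>)" using u by (auto simp: U0_iff)
  have w: "real (\<Sum>(fst (psi \<eta>))) + real (\<Sum>(snd (psi \<eta>))) \<le> M" using psi_weight[OF u] A by simp
  have fs: "finite (fst (psi \<eta>))" "finite (snd (psi \<eta>))" using f by (auto simp: psi_def)
  have b: "real k \<le> M" if "k \<in> fst (psi \<eta>) \<union> snd (psi \<eta>)" for k
  proof -
    have "k \<le> \<Sum>(fst (psi \<eta>)) \<or> k \<le> \<Sum>(snd (psi \<eta>))"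
      using that fs by (auto intro: member_le_sum)
    then show ?thesis using w by (auto simp del: of_nat_sum)
  qed
  have b': "k \<le> nat \<lfloor>M\<rfloor>" if "k \<in> fst (psi \<eta>) \<union> snd (psi \<eta>)" for k
    using b[OF that] by (simp add: le_nat_floor le_floor_iff)
  have "0 \<notin> snd (psi \<eta>)" by (auto simp: psi_def Hm_def)
  then show ?thesis using b' w unfolding Wset_def
    by (cases "psi \<eta>") (auto simp: Suc_le_eq, metis gr0I)
qed

lemma Kset_finite_card: "finite (Kset M) \<and> card (Kset M) \<le> card (Wset M (nat \<lfloor>M\<rfloor>))"
proof -
  have fW: "finite (Wset M (nat \<lfloor>M\<rfloor>))"
    by (rule finite_subset[of _ "Pow {0..nat \<lfloor>M\<rfloor>} \<times> Pow {1..nat \<lfloor>M\<rfloor>}"]) (auto simp: Wset_def)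
  have inj: "inj_on psi (Kset M)" using inj_psi by (rule inj_on_subset) (auto simp: Kset_def)
  have sub: "psi ` Kset M \<subseteq> Wset M (nat \<lfloor>M\<rfloor>)" using psi_into by blast
  have "finite (Kset M)" using finite_imageD[OF finite_subset[OF sub fW] inj] .
  moreover have "card (Kset M) \<le> card (Wset M (nat \<lfloor>M\<rfloor>))" using card_inj_on_le[OF inj sub fW] .
  ultimately show ?thesis by blast
qed

lemma sum_pow_exp:
  fixes A :: "nat set"
  assumes "finite A"
  shows "(\<Sum>X\<in>Pow A. exp (- s * real (\<Sum>X))) = (\<Prod>k\<in>A. 1 + exp (- s * real k))"
proof -
  have "(\<Prod>k\<in>A. exp (- s * real k) + 1) = (\<Sum>X\<in>Pow A. (\<Prod>k\<in>X. exp (- s * real k)) * (\<Prod>k\<in>A - X. 1))"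
    by (rule prod_add[OF assms])
  also have "\<dots> = (\<Sum>X\<in>Pow A. exp (- s * real (\<Sum>X)))"
  proof (intro sum.cong refl)
    fix X assume "X \<in> Pow A"
    then have "finite X" using assms by (auto intro: finite_subset)
    then show "(\<Prod>k\<in>X. exp (- s * real k)) * (\<Prod>k\<in>A - X. 1) = exp (- s * real (\<Sum>X))"
      by (simp add: exp_sum[symmetric] sum_distrib_left)
  qed
  finally show ?thesis by (simp add: add.commute)
qed

lemma card_W_bound:
  assumes s: "0 < s"
  shows "real (card (Wset M m)) \<le> exp (s * M) * (2 * (\<Prod>k=1..m. 1 + exp (- s * real k))\<^sup>2)"
proof -
  let ?U = "Pow {0..m} \<times> Pow {1..m}"
  let ?g = "\<lambda>w. exp (s * M) * (exp (- s * real (\<Sum>(fst w))) * exp (- s * real (\<Sum>(snd w))))"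
  have fU: "finite ?U" by simp
  have WU: "Wset M m \<subseteq> ?U" by (auto simp: Wset_def)
  have "real (card (Wset M m)) = (\<Sum>w\<in>Wset M m. 1)" by simp
  also have "\<dots> \<le> (\<Sum>w\<in>Wset M m. ?g w)"
  proof (rule sum_mono)
    fix w assume "w \<in> Wset M m"
    then have "real (\<Sum>(fst w)) + real (\<Sum>(snd w)) \<le> M" by (auto simp: Wset_def)
    then have "s * (real (\<Sum>(fst w)) + real (\<Sum>(snd w))) \<le> s * M"
      using s by (intro mult_left_mono) auto
    then have "0 \<le> s * M - s * real (\<Sum>(fst w)) - s * real (\<Sum>(snd w))"
      by (simp add: distrib_left)
    then have "1 \<le> exp (s * M - s * real (\<Sum>(fst w)) - s * real (\<Sum>(snd w)))" by simp
    also have "\<dots> = ?g w"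
    proof -
      have "s * M - s * real (\<Sum>(fst w)) - s * real (\<Sum>(snd w)) =
          s * M + (- s * real (\<Sum>(fst w)) + - s * real (\<Sum>(snd w)))" by simp
      then show ?thesis by (simp only: mult_exp_exp)
    qed
    finally show "1 \<le> ?g w" .
  qed
  also have "\<dots> \<le> (\<Sum>w\<in>?U. ?g w)" by (intro sum_mono2 fU WU) auto
  also have "\<dots> = exp (s * M) * ((\<Sum>S\<in>Pow {0..m}. exp (- s * real (\<Sum>S))) * (\<Sum>T\<in>Pow {1..m}. exp (- s * real (\<Sum>T))))"
  proof -
    let ?F = "\<lambda>S. exp (- s * real (\<Sum>S))"
    have "(\<Sum>w\<in>?U. ?g w) = (\<Sum>(S,T)\<in>?U. exp (s * M) * (?F S * ?F T))"
      by (intro sum.cong refl) auto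
    also have "\<dots> = (\<Sum>S\<in>Pow {0..m}. \<Sum>T\<in>Pow {1..m}. exp (s * M) * (?F S * ?F T))"
      by (rule sum.cartesian_product[symmetric])
    also have "\<dots> = exp (s * M) * (\<Sum>S\<in>Pow {0..m}. \<Sum>T\<in>Pow {1..m}. ?F S * ?F T)"
      by (simp only: sum_distrib_left)
    also have "(\<Sum>S\<in>Pow {0..m}. \<Sum>T\<in>Pow {1..m}. ?F S * ?F T) = (\<Sum>S\<in>Pow {0..m}. ?F S) * (\<Sum>T\<in>Pow {1..m}. ?F T)"
      by (rule sum_product[symmetric])
    finally show ?thesis .
  qed
  also have "\<dots> = exp (s * M) * ((\<Prod>k\<in>{0..m}. 1 + exp (- s * real k)) * (\<Prod>k\<in>{1..m}. 1 + exp (- s * real k)))"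
    by (simp only: sum_pow_exp finite_atLeastAtMost)
  also have "(\<Prod>k\<in>{0..m}. 1 + exp (- s * real k)) = 2 * (\<Prod>k\<in>{1..m}. 1 + exp (- s * real k))"
  proof -
    have "{0..m} = insert 0 {1..m}" by auto
    then show ?thesis by simp
  qed
  finally show ?thesis by (simp add: power2_eq_square mult.assoc)
qed

lemma ln_card_Kset:
  assumes M: "0 < M"
  shows "ln (real (card (Kset M))) \<le> 2 * pi * sqrt M / sqrt 6 + ln 2"
proof -
  define s where "s = pi / sqrt (6 * M)"
  have s: "0 < s" using M by (simp add: s_def)
  define m where "m = nat \<lfloor>M\<rfloor>"
  define PP where "PP = (\<Prod>k=1..m. 1 + exp (- s * real k))"
  have Pi: "0 < PP" unfolding PP_def by (intro prod_pos) (auto intro: add_pos_pos)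
  have "Ostep \<in> Kset M" using M by (simp add: Kset_def Ostep_U0 Aa_Ostep)
  then have c1: "1 \<le> card (Kset M)" using Kset_finite_card[of M] by (metis One_nat_def Suc_leI card_gt_0_iff empty_iff)
  have "real (card (Kset M)) \<le> real (card (Wset M m))" using Kset_finite_card[of M] by (simp add: m_def)
  also have "\<dots> \<le> exp (s * M) * (2 * PP\<^sup>2)" unfolding PP_def by (rule card_W_bound[OF s])
  finally have "ln (real (card (Kset M))) \<le> ln (exp (s * M) * (2 * PP\<^sup>2))"
    using c1 by (intro ln_mono) auto
  also have "\<dots> = s * M + ln 2 + 2 * ln PP"
    using Pi by (simp add: ln_mult ln_realpow)
  also have "ln PP = (\<Sum>k=1..m. ln (1 + exp (- s * real k)))"
    unfolding PP_def by (rule ln_prod) (auto simp: add_pos_pos[THEN less_imp_neq, symmetric] intro: add_pos_pos)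

  also have "\<dots> \<le> pi\<^sup>2 / (12 * s)" by (rule key_sum[OF s])
  finally have 1: "ln (real (card (Kset M))) \<le> s * M + ln 2 + pi\<^sup>2 / (6 * s)" by simp
  have sq: "sqrt (6 * M) * sqrt (6 * M) = 6 * M" using M by simp
  have e1: "s * M = pi * sqrt M / sqrt 6"
  proof -
    have "sqrt (6 * M) = sqrt 6 * sqrt M" by (simp add: real_sqrt_mult)
    moreover have "sqrt M * sqrt M = M" using M by simp
    ultimately show ?thesis unfolding s_def using M by (simp add: field_simps)
  qed
  have e2: "pi\<^sup>2 / (6 * s) = pi * sqrt M / sqrt 6"
  proof -
    have "sqrt (6 * M) = sqrt 6 * sqrt M" by (simp add: real_sqrt_mult)
    moreover have "sqrt 6 * sqrt 6 = (6::real)" by simp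
    ultimately show ?thesis unfolding s_def using M by (simp add: field_simps power2_eq_square)
  qed
  show ?thesis using 1 e1 e2 by simp
qed

lemma lim_lb: "((\<lambda>t::real. 1 - (3/2 * sqrt t + 1) * t / (t powr (4/5))\<^sup>2) \<longlongrightarrow> 1) at_top"
  by real_asymp

lemma lim_ub: "((\<lambda>t::real. (ln 4 + 2 * pi * sqrt (t/2 + t powr (4/5)) / sqrt 6) / sqrt t) \<longlongrightarrow> pi / sqrt 3) at_top"
proof -
  have a: "((\<lambda>t::real. ln 4 / sqrt t) \<longlongrightarrow> 0) at_top" by real_asymp
  have b0: "((\<lambda>t::real. sqrt (t/2 + t powr (4/5)) / sqrt t) \<longlongrightarrow> (1/2) powr (1/2)) at_top"
    by real_asymp
  have b: "((\<lambda>t::real. sqrt (t/2 + t powr (4/5)) / sqrt t) \<longlongrightarrow> sqrt (1/2)) at_top"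
    using b0 by (simp add: powr_half_sqrt)
  have c: "((\<lambda>t::real. ln 4 / sqrt t + 2 * pi / sqrt 6 * (sqrt (t/2 + t powr (4/5)) / sqrt t)) \<longlongrightarrow>
      0 + 2 * pi / sqrt 6 * sqrt (1/2)) at_top"
    by (intro tendsto_intros a b)
  have e: "2 * pi / sqrt 6 * sqrt (1/2) = pi / sqrt 3"
  proof -
    have "sqrt 6 = 2 * (sqrt (1/2) * sqrt 3)"
    proof -
      have "sqrt (1/2) * sqrt 3 = sqrt (3/2)" by (simp add: real_sqrt_mult[symmetric])
      moreover have "2 * sqrt (3/2) = sqrt (6::real)"
      proof -
        have "sqrt (4::real) = 2" by (metis real_sqrt_abs abs_numeral power2_eq_square numeral_times_numeral semiring_norm(12) semiring_norm(13))
        moreover have "sqrt 4 * sqrt (3/2) = sqrt (4 * (3/2::real))" by (rule real_sqrt_mult[symmetric])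
        moreover have "4 * (3/2::real) = 6" by simp
        ultimately show ?thesis by simp
      qed
      ultimately show ?thesis by simp
    qed
    then show ?thesis by (simp add: field_simps)
  qed
  have f: "(\<lambda>t::real. ln 4 / sqrt t + 2 * pi / sqrt 6 * (sqrt (t/2 + t powr (4/5)) / sqrt t)) =
      (\<lambda>t::real. (ln 4 + 2 * pi * sqrt (t/2 + t powr (4/5)) / sqrt 6) / sqrt t)"
    by (rule ext) (simp add: add_divide_distrib)
  show ?thesis using c unfolding e f by simp
qed

definition etaK :: "nat \<Rightarrow> config" where "etaK k = (\<lambda>x. x < -1 \<or> x = int k)"

lemma U0_infinite: "infinite U0"
proof -
  have inU: "etaK k \<in> U0" for k
  proof -
    have "Pp (etaK k) = {int k}" by (auto simp: Pp_def etaK_def)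
    moreover have "Hm (etaK k) = {-1}" by (auto simp: Hm_def etaK_def)
    ultimately show ?thesis by (simp add: U0_iff)
  qed
  have "inj etaK"
  proof (rule injI)
    fix k j assume "etaK k = etaK j"
    then have "etaK j (int k)" by (metis etaK_def)
    then show "k = j" by (simp add: etaK_def)
  qed
  then have "infinite (range etaK)" by (simp add: range_inj_infinite)
  moreover have "range etaK \<subseteq> U0" using inU by auto
  ultimately show ?thesis using infinite_super by blast
qed

definition c0 :: real where "c0 = pi / sqrt 3"
definition Mt :: "real \<Rightarrow> real" where "Mt t = t / 2 + t powr (4/5)"
definition n0 :: "real \<Rightarrow> nat" where "n0 t = nat \<lceil>exp (c0 * sqrt t)\<rceil>"
definition Pad :: "real \<Rightarrow> config set" where
  "Pad t = (SOME B. finite B \<and> card B = n0 t \<and> B \<subseteq> U0 - Kset (Mt t))"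
definition Xs :: "real \<Rightarrow> config set" where "Xs t = Kset (Mt t) \<union> Pad t"

lemma Pad_props: "finite (Pad t) \<and> card (Pad t) = n0 t \<and> Pad t \<subseteq> U0 - Kset (Mt t)"
proof -
  have "infinite (U0 - Kset (Mt t))"
    using U0_infinite Kset_finite_card[of "Mt t"] Diff_infinite_finite by blast
  then have "\<exists>B. finite B \<and> card B = n0 t \<and> B \<subseteq> U0 - Kset (Mt t)"
    by (rule infinite_arbitrarily_large)
  then show ?thesis unfolding Pad_def by (rule someI_ex)
qed

lemma Xs_basic: "Xs t \<subseteq> U0 \<and> finite (Xs t) \<and> card (Xs t) = card (Kset (Mt t)) + n0 t"
proof -
  have "Kset (Mt t) \<subseteq> U0" by (auto simp: Kset_def)
  moreover have "Kset (Mt t) \<inter> Pad t = {}" using Pad_props by blast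
  moreover have "Pad t \<subseteq> U0" using Pad_props by blast
  ultimately show ?thesis unfolding Xs_def using Pad_props[of t] Kset_finite_card[of "Mt t"]
    by (simp add: card_Un_disjoint)
qed

lemma prob_lb:
  assumes t: "1 \<le> t"
  shows "1 - (3/2 * sqrt t + 1) * t / (t powr (4/5))\<^sup>2 \<le> prob_in (1/2) t (Xs t)"
proof -
  define c where "c = t / 2"
  define d where "d = t powr (4/5)"
  define a where "a = sqrt t"
  have pos: "0 \<le> t" "0 \<le> c" "0 < d" "0 < a" using t by (auto simp: c_def d_def a_def)
  have sub: "{\<eta>\<in>U0. ARe \<eta> \<le> c + d} \<subseteq> Xs t"
    by (auto simp: Xs_def Kset_def ARe_def Mt_def c_def d_def)
  have fin: "finite (Xs t)" using Xs_basic by blast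
  define lbN where "lbN N = 1 - beta (Suc N) t - (c\<^sup>2 + t\<^sup>2 / 4 + (- c + c * beta N t + t / (2 * a) + a + 1) * t) / d\<^sup>2" for N
  have le: "lbN N \<le> prob_in (1/2) t (Xs t)" for N
    unfolding lbN_def by (rule prob_in_ge[OF pos(1) fin sub pos(3) pos(2) pos(4)])
  have bz: "(\<lambda>N. beta N t) \<longlonglongrightarrow> 0" using beta_zero pos(1) by blast
  have bz': "(\<lambda>N. beta (Suc N) t) \<longlonglongrightarrow> 0" using LIMSEQ_Suc[OF bz] .
  have "lbN \<longlonglongrightarrow> 1 - 0 - (c\<^sup>2 + t\<^sup>2 / 4 + (- c + c * 0 + t / (2 * a) + a + 1) * t) / d\<^sup>2"
    unfolding lbN_def using pos(3) by (intro tendsto_intros bz bz') simp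
  then have "1 - 0 - (c\<^sup>2 + t\<^sup>2 / 4 + (- c + c * 0 + t / (2 * a) + a + 1) * t) / d\<^sup>2 \<le> prob_in (1/2) t (Xs t)"
    using le by (intro LIMSEQ_le_const2) auto
  moreover have "c\<^sup>2 + t\<^sup>2 / 4 + (- c + c * 0 + t / (2 * a) + a + 1) * t = (3/2 * sqrt t + 1) * t"
  proof -
    have h': "t / (2 * sqrt t) = sqrt t / 2"
    proof -
      have "sqrt t * sqrt t = t" using pos by simp
      then show ?thesis using t by (simp add: field_simps)
    qed
    show ?thesis unfolding a_def c_def h' by (simp add: power2_eq_square algebra_simps)
  qed
  ultimately show ?thesis by (simp add: d_def)
qed

lemma card_bounds:
  assumes t: "1 \<le> t"
  shows "c0 * sqrt t \<le> ln (real (card (Xs t)))"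
    and "ln (real (card (Xs t))) \<le> ln 4 + 2 * pi * sqrt (t/2 + t powr (4/5)) / sqrt 6"
proof -
  define F where "F = 2 * pi * sqrt (Mt t) / sqrt 6"
  have M: "0 < Mt t" using t by (simp add: Mt_def add_pos_nonneg)
  have cX: "card (Xs t) = card (Kset (Mt t)) + n0 t" using Xs_basic by blast
  have rn: "real (n0 t) = real_of_int \<lceil>exp (c0 * sqrt t)\<rceil>"
    unfolding n0_def by (simp add: less_imp_le)
  have n0ge: "exp (c0 * sqrt t) \<le> real (n0 t)" unfolding rn by (rule le_of_int_ceiling)
  have n0le: "real (n0 t) \<le> exp (c0 * sqrt t) + 1" unfolding rn by (rule of_int_ceiling_le_add_one)
  show "c0 * sqrt t \<le> ln (real (card (Xs t)))"
  proof -
    have "exp (c0 * sqrt t) \<le> real (card (Xs t))" using n0ge cX by simp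
    then have "ln (exp (c0 * sqrt t)) \<le> ln (real (card (Xs t)))" by (intro ln_mono) auto
    then show ?thesis by simp
  qed
  have cK1: "1 \<le> card (Kset (Mt t))"
  proof -
    have "Ostep \<in> Kset (Mt t)" using M by (simp add: Kset_def Ostep_U0 Aa_Ostep)
    then show ?thesis using Kset_finite_card[of "Mt t"] by (metis One_nat_def Suc_leI card_gt_0_iff empty_iff)
  qed
  have lnK: "ln (real (card (Kset (Mt t)))) \<le> F + ln 2" unfolding F_def by (rule ln_card_Kset[OF M])
  have K: "real (card (Kset (Mt t))) \<le> 2 * exp F"
  proof -
    have "real (card (Kset (Mt t))) = exp (ln (real (card (Kset (Mt t)))))" using cK1 by simp
    also have "\<dots> \<le> exp (F + ln 2)" using lnK by simp
    finally show ?thesis by (simp add: exp_add)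
  qed
  have cF: "c0 * sqrt t \<le> F"
  proof -
    have "sqrt (t / 2) \<le> sqrt (Mt t)" unfolding Mt_def by simp
    moreover have "c0 * sqrt t = 2 * pi * sqrt (t / 2) / sqrt 6"
    proof -
      have "sqrt 6 = 2 * (sqrt (1/2) * sqrt 3)"
      proof -
        have "sqrt (1/2) * sqrt 3 = sqrt (3/2)" by (simp add: real_sqrt_mult[symmetric])
        moreover have "2 * sqrt (3/2) = sqrt (6::real)"
        proof -
          have "sqrt (4::real) = 2" by (metis real_sqrt_abs abs_numeral power2_eq_square numeral_times_numeral semiring_norm(12) semiring_norm(13))
          moreover have "sqrt 4 * sqrt (3/2) = sqrt (4 * (3/2::real))" by (rule real_sqrt_mult[symmetric])
          moreover have "4 * (3/2::real) = 6" by simp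
          ultimately show ?thesis by simp
        qed
        ultimately show ?thesis by simp
      qed
      moreover have "sqrt (t / 2) = sqrt t * sqrt (1/2)" by (simp add: real_sqrt_mult[symmetric])
      ultimately show ?thesis unfolding c0_def by (simp add: field_simps)
    qed
    ultimately show ?thesis unfolding F_def by (simp add: divide_right_mono)
  qed
  have N: "real (n0 t) \<le> 2 * exp F"
  proof -
    have "exp (c0 * sqrt t) \<le> exp F" using cF by simp
    moreover have "1 \<le> exp F"
    proof -
      have "0 \<le> F" unfolding F_def using M by simp
      then show ?thesis by simp
    qed
    ultimately show ?thesis using n0le by linarith
  qed
  have "real (card (Xs t)) \<le> 4 * exp F" using K N cX by simp
  then have "ln (real (card (Xs t))) \<le> ln (4 * exp F)" using cX cK1 by (intro ln_mono) auto
  also have "\<dots> = ln 4 + F" by (simp add: ln_mult)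
  finally show "ln (real (card (Xs t))) \<le> ln 4 + 2 * pi * sqrt (t/2 + t powr (4/5)) / sqrt 6"
    by (simp add: F_def Mt_def)
qed

theorem lemma3p3:
  shows "\<exists>X :: real \<Rightarrow> config set.
     (\<forall>t>0. X t \<subseteq> U0 \<and> finite (X t)) \<and>
     ((\<lambda>t. prob_in (1/2) t (X t)) \<longlongrightarrow> 1) at_top \<and>
     ((\<lambda>t. ln (real (card (X t))) / sqrt t) \<longlongrightarrow> pi / sqrt 3) at_top"
proof (intro exI conjI allI impI)
  fix t :: real
  show "Xs t \<subseteq> U0" "finite (Xs t)" using Xs_basic by blast+
next
  show "((\<lambda>t. prob_in (1/2) t (Xs t)) \<longlongrightarrow> 1) at_top"
  proof (rule tendsto_sandwich[OF _ _ lim_lb tendsto_const])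
    show "\<forall>\<^sub>F t in at_top. 1 - (3/2 * sqrt t + 1) * t / (t powr (4/5))\<^sup>2 \<le> prob_in (1/2) t (Xs t)"
      using prob_lb by (intro eventually_at_top_linorderI[of 1]) auto
    show "\<forall>\<^sub>F t in at_top. prob_in (1/2) t (Xs t) \<le> 1"
      using prob_in_le1 Xs_basic by (intro eventually_at_top_linorderI[of 0]) auto
  qed
next
  have lo: "((\<lambda>t::real. c0 * sqrt t / sqrt t) \<longlongrightarrow> pi / sqrt 3) at_top"
  proof (rule Lim_transform_eventually[OF tendsto_const[of "pi / sqrt 3"]])
    show "\<forall>\<^sub>F t in at_top. pi / sqrt 3 = c0 * sqrt t / sqrt t"
      by (intro eventually_at_top_linorderI[of 1]) (simp add: c0_def)
  qed
  show "((\<lambda>t. ln (real (card (Xs t))) / sqrt t) \<longlongrightarrow> pi / sqrt 3) at_top"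
  proof (rule tendsto_sandwich[OF _ _ lo lim_ub])
    show "\<forall>\<^sub>F t in at_top. c0 * sqrt t / sqrt t \<le> ln (real (card (Xs t))) / sqrt t"
      by (intro eventually_at_top_linorderI[of 1] divide_right_mono card_bounds(1)) auto
    show "\<forall>\<^sub>F t in at_top. ln (real (card (Xs t))) / sqrt t \<le> (ln 4 + 2 * pi * sqrt (t/2 + t powr (4/5)) / sqrt 6) / sqrt t"
      by (intro eventually_at_top_linorderI[of 1] divide_right_mono card_bounds(2)) auto
  qed
qed

end
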